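(* Let $n>2k$, $k\ge t+3$, and let $\mathcal F\subseteq\binom{[n]}{k}$ be a maximal $t$-intersecting family with $\tau_t(\mathcal F)=t+2$ and $\tau_t(\mathcal T_t(\mathcal F))=t+2$. (i) If $t=1$, then $|\mathcal T_t(\mathcal F)|<(k-t)(k-t+1)+1$. (ii) If $t\ge 2$, then $|\mathcal T_t(\mathcal F)|\le\binom{t+4}{2}$, and if equality holds then $\mathcal T_t(\mathcal F)=\binom{Z}{t+2}$ for some $Z\in\binom{[n]}{t+4}$.
   Context: A family is $t$-intersecting if any two members meet in at least $t$ elements. A $t$-cover of a family $\mathcal G$ of subsets of $[n]$ is a set $S\subseteq[n]$ with $|S\cap G|\ge t$ for all $G\in\mathcal G$; $\tau_t(\mathcal G)$ is the minimum size of a $t$-cover, and $\mathcal T_t(\mathcal G)$ is the set of all $t$-covers of $\mathcal G$ of size $\tau_t(\mathcal G)$. A $t$-intersecting $\mathcal F\subseteq\binom{[n]}{k}$ is maximal if no $t$-intersecting subfamily of $\binom{[n]}{k}$ properly contains it. *)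

theory Defs
  imports Main
begin

definition ksets :: "nat set \<Rightarrow> nat \<Rightarrow> nat set set" where
  "ksets X k = {A. A \<subseteq> X \<and> card A = k}"

definition t_intersecting :: "nat \<Rightarrow> nat set set \<Rightarrow> bool" where
  "t_intersecting t F \<longleftrightarrow> (\<forall>A\<in>F. \<forall>B\<in>F. t \<le> card (A \<inter> B))"

definition maximal_t_intersecting :: "nat \<Rightarrow> nat \<Rightarrow> nat \<Rightarrow> nat set set \<Rightarrow> bool" where
  "maximal_t_intersecting n k t F \<longleftrightarrow>
     F \<subseteq> ksets {1..n} k \<and> t_intersecting t F \<and>
     (\<forall>G. F \<subset> G \<and> G \<subseteq> ksets {1..n} k \<longrightarrow> \<not> t_intersecting t G)"

definition t_cover :: "nat \<Rightarrow> nat \<Rightarrow> nat set set \<Rightarrow> nat set \<Rightarrow> bool" where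
  "t_cover n t G S \<longleftrightarrow> S \<subseteq> {1..n} \<and> (\<forall>A\<in>G. t \<le> card (S \<inter> A))"

definition tau :: "nat \<Rightarrow> nat \<Rightarrow> nat set set \<Rightarrow> nat" where
  "tau n t G = (LEAST m. \<exists>S. t_cover n t G S \<and> card S = m)"

definition Tcov :: "nat \<Rightarrow> nat \<Rightarrow> nat set set \<Rightarrow> nat set set" where
  "Tcov n t G = {S. t_cover n t G S \<and> card S = tau n t G}"

end

theory Submission
  imports Defs
begin

definition NN :: "nat set set \<Rightarrow> nat set \<Rightarrow> nat \<Rightarrow> nat set" where
  "NN T A y = {z. z \<notin> A \<and> insert z (A - {y}) \<in> T}"
definition DD :: "nat set set \<Rightarrow> nat set \<Rightarrow> nat set \<Rightarrow> nat set set" where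
  "DD T A e = {D. card D = 2 \<and> D \<inter> A = {} \<and> (A - e) \<union> D \<in> T}"

lemma pairs4:
  assumes "finite X" "\<forall>D\<in>X. card D = 2" "\<And>v. card {D \<in> X. v \<in> D} \<le> 2" "4 \<le> card X"
  shows "\<exists>D1\<in>X. \<exists>D2\<in>X. D1 \<inter> D2 = {}"
proof (rule ccontr)
  assume na: "\<not> ?thesis"
  obtain D1 where D1: "D1 \<in> X" using assms(4) by fastforce
  obtain a b where ab: "D1 = {a,b}" "a \<noteq> b" using assms(2) D1 card_2_iff by metis
  have "X \<subseteq> {D \<in> X. a \<in> D} \<union> {D \<in> X. b \<in> D}"
  proof
    fix D assume "D \<in> X"
    then have "D \<inter> D1 \<noteq> {}" using na D1 by blast
    then show "D \<in> {D \<in> X. a \<in> D} \<union> {D \<in> X. b \<in> D}" using ab \<open>D \<in> X\<close> by blast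
  qed
  then have "card X \<le> card ({D \<in> X. a \<in> D} \<union> {D \<in> X. b \<in> D})"
    using assms(1) by (simp add: card_mono)
  also have "\<dots> = card {D \<in> X. a \<in> D} + card {D \<in> X. b \<in> D} - card ({D \<in> X. a \<in> D} \<inter> {D \<in> X. b \<in> D})"
    using card_Un_Int[of "{D \<in> X. a \<in> D}" "{D \<in> X. b \<in> D}"] assms(1) by simp
  finally have X: "card X \<le> card {D \<in> X. a \<in> D} + card {D \<in> X. b \<in> D} - card ({D \<in> X. a \<in> D} \<inter> {D \<in> X. b \<in> D})" .
  have i1: "card ({D \<in> X. a \<in> D} \<inter> {D \<in> X. b \<in> D}) \<ge> 1"
  proof -
    have "D1 \<in> {D \<in> X. a \<in> D} \<inter> {D \<in> X. b \<in> D}" using D1 ab by blast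
    moreover have "finite ({D \<in> X. a \<in> D} \<inter> {D \<in> X. b \<in> D})" using assms(1) by simp
    ultimately show ?thesis by (metis One_nat_def Suc_leI card_gt_0_iff empty_iff)
  qed
  have "card X \<le> 3" using X i1 assms(3)[of a] assms(3)[of b] by linarith
  then show False using assms(4) by simp
qed

lemma two_in: "card D = 2 \<Longrightarrow> x \<in> D \<Longrightarrow> y \<in> D \<Longrightarrow> x \<noteq> y \<Longrightarrow> D = {x,y}"
proof -
  assume a: "card D = 2" "x \<in> D" "y \<in> D" "x \<noteq> y"
  have f: "finite D" using a(1) card.infinite by fastforce
  have "{x,y} \<subseteq> D" "card {x,y} = 2" using a by auto
  thus ?thesis using card_subset_eq[OF f, of "{x,y}"] a(1) by simp
qed

lemma three_not: "card D = 2 \<Longrightarrow> x \<in> D \<Longrightarrow> y \<in> D \<Longrightarrow> z \<in> D \<Longrightarrow> x \<noteq> y \<Longrightarrow> x \<noteq> z \<Longrightarrow> y \<noteq> z \<Longrightarrow> False"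
proof -
  assume a: "card D = 2" "x \<in> D" "y \<in> D" "z \<in> D" "x \<noteq> y" "x \<noteq> z" "y \<noteq> z"
  have "D = {x,y}" using two_in[OF a(1,2,3,5)] .
  thus False using a by blast
qed

lemma cross4:
  assumes d12: "D1 \<inter> D2 = {}" "card D1 = 2" "card D2 = 2"
    and Y: "\<forall>D\<in>Y. card D = 2 \<and> D \<inter> D1 \<noteq> {} \<and> D \<inter> D2 \<noteq> {}"
  shows "card Y \<le> 4" "card Y = 4 \<Longrightarrow> card D = 2 \<Longrightarrow> (\<forall>D'\<in>Y. D \<inter> D' \<noteq> {}) \<Longrightarrow> D = D1 \<or> D = D2"
proof -
  have f1: "finite D1" "finite D2" using d12 card.infinite by fastforce+
  let ?P = "(\<lambda>(a,b). {a,b}) ` (D1 \<times> D2)"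
  have sub: "Y \<subseteq> ?P"
  proof
    fix D assume D: "D \<in> Y"
    obtain a where a: "a \<in> D" "a \<in> D1" using Y D by blast
    obtain b where b: "b \<in> D" "b \<in> D2" using Y D by blast
    have "a \<noteq> b" using a b d12(1) by blast
    have cD0: "card D = 2" using Y D by blast
    then have "D = {a,b}" using two_in[OF cD0 a(1) b(1)] \<open>a \<noteq> b\<close> by blast
    then show "D \<in> ?P" using a b by blast
  qed
  have fP: "finite ?P" using f1 by simp
  have c4: "card ?P \<le> 4"
  proof -
    have "card ?P \<le> card (D1 \<times> D2)" by (rule card_image_le) (simp add: f1)
    also have "\<dots> = 4" using d12 by (simp add: card_cartesian_product)
    finally show ?thesis .
  qed
  show "card Y \<le> 4" using card_mono[OF fP sub] c4 by linarith
  assume cY: "card Y = 4" and cD: "card D = 2" and meet: "\<forall>D'\<in>Y. D \<inter> D' \<noteq> {}"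
  have YP: "Y = ?P" using card_subset_eq[OF fP sub] cY c4 card_mono[OF fP sub] by linarith
  obtain a1 a2 where a: "D1 = {a1,a2}" "a1 \<noteq> a2" using d12(2) card_2_iff by metis
  obtain b1 b2 where b: "D2 = {b1,b2}" "b1 \<noteq> b2" using d12(3) card_2_iff by metis
  have dist: "a1 \<noteq> b1" "a1 \<noteq> b2" "a2 \<noteq> b1" "a2 \<noteq> b2" using a b d12(1) by blast+
  have inY: "{a1,b1} \<in> Y" "{a1,b2} \<in> Y" "{a2,b1} \<in> Y" "{a2,b2} \<in> Y" using YP a b by blast+
  have m: "D \<inter> {a1,b1} \<noteq> {}" "D \<inter> {a1,b2} \<noteq> {}" "D \<inter> {a2,b1} \<noteq> {}" "D \<inter> {a2,b2} \<noteq> {}"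
    using meet inY by blast+
  show "D = D1 \<or> D = D2"
  proof (cases "a1 \<in> D")
    case True
    show ?thesis
    proof (cases "a2 \<in> D")
      case True
      then have "D = D1" using two_in[OF cD \<open>a1 \<in> D\<close> True a(2)] a(1) by simp
      then show ?thesis by simp
    next
      case False
      then have "b1 \<in> D" "b2 \<in> D" using m(3,4) by blast+
      then show ?thesis using three_not[OF cD \<open>a1 \<in> D\<close> \<open>b1 \<in> D\<close> \<open>b2 \<in> D\<close> dist(1) dist(2) b(2)] by blast
    qed
  next
    case False
    then have "b1 \<in> D" "b2 \<in> D" using m(1,2) by blast+
    then have "D = D2" using two_in[OF cD _ _ b(2)] b(1) by simp
    then show ?thesis by simp
  qed
qed

locale tfam =
  fixes G :: "nat set" and t :: nat and T :: "nat set set"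
  assumes finG: "finite G"
  and memb: "\<And>C. C \<in> T \<Longrightarrow> C \<subseteq> G \<and> card C = t + 2"
  and tint: "\<And>C C'. C \<in> T \<Longrightarrow> C' \<in> T \<Longrightarrow> t \<le> card (C \<inter> C')"
  and nocov: "\<And>S. S \<subseteq> G \<Longrightarrow> card S = t + 1 \<Longrightarrow> \<exists>C\<in>T. card (S \<inter> C) < t"
  and tpos: "1 \<le> t"
begin

lemma finT: "finite T"
proof -
  have "T \<subseteq> Pow G" using memb by auto
  thus ?thesis using finG finite_subset by blast
qed

lemma memfin: "C \<in> T \<Longrightarrow> finite C"
  using memb finG finite_subset by blast

lemma cardout: "C \<in> T \<Longrightarrow> A \<in> T \<Longrightarrow> card (C - A) \<le> 2"
proof -
  assume a: "C \<in> T" "A \<in> T"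
  have "card (C - A) = card C - card (C \<inter> A)"
    by (metis Diff_Diff_Int card_Diff_subset_Int inf_commute a(1) memfin finite_Int Int_lower1 card_Diff_subset Diff_subset)
  thus ?thesis using tint[OF a] memb[OF a(1)] by (simp add: Int_commute)
qed

end

locale tfamA = tfam +
  fixes A :: "nat set"
  assumes AT: "A \<in> T"
begin

abbreviation "N y \<equiv> NN T A y"
abbreviation "Dg e \<equiv> DD T A e"

lemma finA: "finite A" and cardA: "card A = t + 2" and AG: "A \<subseteq> G"
  using memb[OF AT] memfin[OF AT] by auto

lemma inter_formula:
  assumes "D \<inter> A = {}" "D' \<inter> A = {}" "finite D"
  shows "card (((A - e) \<union> D) \<inter> ((A - e') \<union> D')) = card (A - (e \<union> e')) + card (D \<inter> D')"
proof -
  have "((A - e) \<union> D) \<inter> ((A - e') \<union> D') = (A - (e \<union> e')) \<union> (D \<inter> D')"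
    using assms by blast
  moreover have "(A - (e \<union> e')) \<inter> (D \<inter> D') = {}" using assms by blast
  ultimately show ?thesis using finA assms(3) by (simp add: card_Un_disjoint)
qed


lemma card_AC: "C \<in> T \<Longrightarrow> card (A - C) = card (C - A)"
proof -
  assume c: "C \<in> T"
  have f: "finite C" using memfin[OF c] .
  have "card (A - C) = card A - card (A \<inter> C)" using finA by (simp add: card_Diff_subset_Int)
  moreover have "card (C - A) = card C - card (C \<inter> A)" using f by (simp add: card_Diff_subset_Int)
  ultimately show ?thesis using cardA memb[OF c] by (simp add: Int_commute)
qed

lemma decomp:
  assumes c: "C \<in> T"
  shows "C = A \<or> (\<exists>y\<in>A. \<exists>z\<in>N y. C = insert z (A - {y})) \<or>
         (\<exists>e. e \<subseteq> A \<and> card e = 2 \<and> (\<exists>D\<in>Dg e. C = (A - e) \<union> D))"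
proof -
  have f: "finite C" using memfin[OF c] .
  have le: "card (C - A) \<le> 2" using cardout[OF c AT] .
  have eq: "card (A - C) = card (C - A)" using card_AC[OF c] .
  consider "card (C - A) = 0" | "card (C - A) = 1" | "card (C - A) = 2" using le by linarith
  then show ?thesis
  proof cases
    case 1
    then have "C - A = {}" using f by auto
    moreover have "A - C = {}" proof -
      have "card (A - C) = 0" using 1 eq by simp
      thus ?thesis using finA by simp
    qed
    ultimately have "C = A" by blast
    then show ?thesis by blast
  next
    case 2
    obtain z where z: "C - A = {z}" using card_1_singletonE[OF 2] by blast
    have c1: "card (A - C) = 1" using 2 eq by simp
    obtain y where y: "A - C = {y}" using card_1_singletonE[OF c1] by blast
    have Ceq: "C = insert z (A - {y})" using z y by blast
    have yA: "y \<in> A" using y by blast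
    have zA: "z \<notin> A" using z by blast
    have "z \<in> N y" unfolding NN_def using zA c Ceq by simp
    then show ?thesis using Ceq yA by blast
  next
    case 3
    define e where "e = A - C"
    define D where "D = C - A"
    have ce: "card e = 2" using 3 eq e_def by simp
    have Ceq: "C = (A - e) \<union> D" unfolding e_def D_def by blast
    have DA: "D \<inter> A = {}" using D_def by blast
    have cD: "card D = 2" using 3 D_def by simp
    have inT: "(A - e) \<union> D \<in> T" using c Ceq by simp
    have "D \<in> Dg e" unfolding DD_def using cD inT DA by simp
    moreover have "e \<subseteq> A" using e_def by blast
    ultimately show ?thesis using ce Ceq by blast
  qed
qed


lemma card_AminusU: "e \<subseteq> A \<Longrightarrow> card (A - e) = t + 2 - card e"
  using finA cardA by (simp add: card_Diff_subset finite_subset)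

lemma DgD: "D \<in> Dg e \<Longrightarrow> card D = 2 \<and> D \<inter> A = {} \<and> (A - e) \<union> D \<in> T \<and> finite D"
proof -
  assume "D \<in> Dg e"
  then have a: "card D = 2" "D \<inter> A = {}" "(A - e) \<union> D \<in> T" unfolding DD_def by auto
  have "finite D" using a(1) card_ge_0_finite by force
  then show ?thesis using a by blast
qed

lemma NND: "z \<in> N y \<Longrightarrow> z \<notin> A \<and> insert z (A - {y}) \<in> T"
  unfolding NN_def by auto

lemma Rgen:
  assumes "D \<in> Dg e" "D' \<in> Dg e'" "e \<subseteq> A" "e' \<subseteq> A"
  shows "t + card (e \<union> e') \<le> t + 2 + card (D \<inter> D')"
proof -
  have d1: "card D = 2 \<and> D \<inter> A = {} \<and> (A - e) \<union> D \<in> T \<and> finite D" using DgD[OF assms(1)] .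
  have d2: "card D' = 2 \<and> D' \<inter> A = {} \<and> (A - e') \<union> D' \<in> T \<and> finite D'" using DgD[OF assms(2)] .
  have "t \<le> card (((A - e) \<union> D) \<inter> ((A - e') \<union> D'))"
    using tint d1 d2 by blast
  also have "\<dots> = card (A - (e \<union> e')) + card (D \<inter> D')"
    using inter_formula d1 d2 by blast
  also have "card (A - (e \<union> e')) = t + 2 - card (e \<union> e')"
    using card_AminusU assms(3,4) by simp
  finally show ?thesis
    using card_mono[OF finA, of "e \<union> e'"] assms(3,4) cardA by simp
qed

lemma R1:
  assumes "D \<in> Dg e" "D' \<in> Dg e'" "e \<subseteq> A" "e' \<subseteq> A" "card e = 2" "card e' = 2" "e \<inter> e' = {}"
  shows "D = D'"
proof -
  have fe: "finite e" "finite e'" using assms(5,6) card.infinite by fastforce+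
  have "card (e \<union> e') = 4" using assms(5,6,7) fe card_Un_disjoint by fastforce
  then have c: "2 \<le> card (D \<inter> D')" using Rgen[OF assms(1-4)] by simp
  have d: "card D = 2" "card D' = 2" "finite D" "finite D'" using DgD assms(1,2) by auto
  have "D \<inter> D' = D" using card_subset_eq[of D "D \<inter> D'"] d c
    by (metis Int_lower1 card_mono le_antisym)
  moreover have "D \<inter> D' = D'" using card_subset_eq[of D' "D \<inter> D'"] d c
    by (metis Int_lower2 card_mono le_antisym)
  ultimately show ?thesis by simp
qed

lemma R2:
  assumes "D \<in> Dg e" "D' \<in> Dg e'" "e \<subseteq> A" "e' \<subseteq> A" "card (e \<union> e') = 3"
  shows "D \<inter> D' \<noteq> {}"
  using Rgen[OF assms(1-4)] assms(5) by auto

lemma R3: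
  assumes "z \<in> N y" "D \<in> Dg e" "e \<subseteq> A" "card e = 2" "y \<in> A" "y \<notin> e"
  shows "z \<in> D"
proof (rule ccontr)
  assume nz: "z \<notin> D"
  have m1: "insert z (A - {y}) \<in> T" and zA: "z \<notin> A" using NND assms(1) by auto
  have d: "D \<inter> A = {}" "(A - e) \<union> D \<in> T" using DgD assms(2) by auto
  have "insert z (A - {y}) \<inter> ((A - e) \<union> D) = A - insert y e"
    using nz zA d(1) by blast
  moreover have "card (A - insert y e) = t - 1"
  proof -
    have fe: "finite e" using assms(4) card.infinite by fastforce
    have "card (insert y e) = 3" using assms(4,6) fe by simp
    thus ?thesis using card_AminusU[of "insert y e"] assms(3,5) by simp
  qed
  ultimately have "card (insert z (A - {y}) \<inter> ((A - e) \<union> D)) < t" using tpos by simp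
  thus False using tint[OF m1 d(2)] by simp
qed

lemma NNle2: assumes "y \<in> A" shows "card (N y) \<le> 2" "finite (N y)"
proof -
  have S: "A - {y} \<subseteq> G" "card (A - {y}) = t + 1" using AG cardA assms finA by auto
  obtain C where C: "C \<in> T" "card ((A - {y}) \<inter> C) < t" using nocov[OF S] by blast
  have sub: "N y \<subseteq> C - A"
  proof
    fix z assume z: "z \<in> N y"
    have m: "insert z (A - {y}) \<in> T" "z \<notin> A" using NND z by auto
    have tz: "t \<le> card (insert z (A - {y}) \<inter> C)" using tint[OF m(1) C(1)] .
    have "z \<in> C"
    proof (rule ccontr)
      assume "z \<notin> C"
      then have "insert z (A - {y}) \<inter> C = (A - {y}) \<inter> C" by simp
      then show False using tz C(2) by simp
    qed
    thus "z \<in> C - A" using m(2) by blast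
  qed
  have "card (N y) \<le> card (C - A)" by (rule card_mono[OF _ sub]) (simp add: memfin[OF C(1)])
  then show "card (N y) \<le> 2" using cardout[OF C(1) AT] by simp
  show "finite (N y)" using sub memfin[OF C(1)] finite_subset by blast
qed

lemma star2:
  assumes "e \<subseteq> A" "card e = 2" "v \<notin> A"
  shows "card {D \<in> Dg e. v \<in> D} \<le> 2"
proof (cases "v \<in> G")
  case False
  have "{D \<in> Dg e. v \<in> D} = {}"
  proof (rule ccontr)
    assume "{D \<in> Dg e. v \<in> D} \<noteq> {}"
    then obtain D where "D \<in> Dg e" "v \<in> D" by blast
    then show False using DgD memb False by blast
  qed
  then show ?thesis by (metis card.empty zero_le)
next
  case True
  have fe: "finite e" using assms(2) card.infinite by fastforce
  have S: "insert v (A - e) \<subseteq> G" "card (insert v (A - e)) = t + 1"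
    using AG True assms card_AminusU finA by auto
  obtain C where C: "C \<in> T" "card (insert v (A - e) \<inter> C) < t" using nocov[OF S] by blast
  let ?X = "{D \<in> Dg e. v \<in> D}"
  have inj: "inj_on (\<lambda>D. D - {v}) ?X"
  proof (rule inj_onI)
    fix D1 D2 assume "D1 \<in> ?X" "D2 \<in> ?X" "D1 - {v} = D2 - {v}"
    thus "D1 = D2" by (metis (no_types, lifting) insert_Diff mem_Collect_eq)
  qed
  have img: "(\<lambda>D. D - {v}) ` ?X \<subseteq> (\<lambda>a. {a}) ` (C - A)"
  proof
    fix X assume "X \<in> (\<lambda>D. D - {v}) ` ?X"
    then obtain D where D: "D \<in> Dg e" "v \<in> D" "X = D - {v}" by blast
    have dd: "card D = 2" "D \<inter> A = {}" "(A - e) \<union> D \<in> T" "finite D" using DgD D(1) by auto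
    have c1: "card (D - {v}) = 1" using dd(1) D(2) dd(4) by simp
    obtain a where a: "D - {v} = {a}" using card_1_singletonE[OF c1] by blast
    have Deq: "(A - e) \<union> D = insert a (insert v (A - e))" using a D(2) by blast
    have ta: "t \<le> card (((A - e) \<union> D) \<inter> C)" using tint[OF dd(3) C(1)] .
    have "a \<in> C"
    proof (rule ccontr)
      assume "a \<notin> C"
      then have "((A - e) \<union> D) \<inter> C = insert v (A - e) \<inter> C" unfolding Deq by simp
      then show False using ta C(2) by simp
    qed
    moreover have "a \<notin> A" using a dd(2) by blast
    ultimately show "X \<in> (\<lambda>a. {a}) ` (C - A)" using a D(3) by blast
  qed
  have "card ?X = card ((\<lambda>D. D - {v}) ` ?X)" using card_image[OF inj] by simp
  also have "\<dots> \<le> card ((\<lambda>a. {a}) ` (C - A))"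
    by (rule card_mono[OF _ img]) (simp add: memfin[OF C(1)])
  also have "\<dots> \<le> card (C - A)" by (rule card_image_le) (simp add: memfin[OF C(1)])
  also have "\<dots> \<le> 2" using cardout[OF C(1) AT] .
  finally show ?thesis .
qed

lemma C1:
  assumes "y \<in> A"
  shows "\<exists>e. e \<subseteq> A \<and> card e = 2 \<and> y \<notin> e \<and> Dg e \<noteq> {}"
proof -
  have S: "A - {y} \<subseteq> G" "card (A - {y}) = t + 1" using AG cardA assms finA by auto
  obtain C where C: "C \<in> T" "card ((A - {y}) \<inter> C) < t" using nocov[OF S] by blast
  have fC: "finite C" using memfin[OF C(1)] .
  have "A \<inter> C = ((A - {y}) \<inter> C) \<union> ({y} \<inter> C)" using assms by blast
  then have "card (A \<inter> C) \<le> card ((A - {y}) \<inter> C) + card ({y} \<inter> C)"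
    by (metis card_Un_le)
  moreover have "card ({y} \<inter> C) \<le> 1" by (simp add: card_le_Suc0_iff_eq)
  moreover have "t \<le> card (A \<inter> C)" using tint[OF AT C(1)] .
  ultimately have cAC: "card (A \<inter> C) = t" using C(2) by linarith
  have yC: "y \<in> C"
  proof (rule ccontr)
    assume "y \<notin> C"
    then have "A \<inter> C = (A - {y}) \<inter> C" by blast
    then show False using C(2) cAC by simp
  qed
  define e where "e = A - C"
  define D where "D = C - A"
  have ce: "card e = 2" using cardA cAC finA unfolding e_def by (simp add: card_Diff_subset_Int)
  have cD: "card D = 2" using card_AC[OF C(1)] ce unfolding e_def D_def by simp
  have Ceq: "(A - e) \<union> D = C" unfolding e_def D_def by blast
  have DA: "D \<inter> A = {}" unfolding D_def by blast
  have "D \<in> Dg e" unfolding DD_def using cD DA Ceq C(1) by simp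
  moreover have "y \<notin> e" using yC e_def by blast
  ultimately show ?thesis using ce e_def by blast
qed


lemma finDg: "finite (Dg e)"
proof -
  have "Dg e \<subseteq> Pow G" using DgD memb by blast
  thus ?thesis using finG finite_subset by blast
qed

lemma L1:
  assumes t1: "t = 1"
  shows "card T \<le> 12"
proof -
  have c3: "card A = 3" using cardA t1 by simp
  obtain p q r where pqr: "A = {p,q,r}" "p \<noteq> q" "q \<noteq> r" "p \<noteq> r" using c3 card_3_iff by metis
  define f where "f y = card (N y) + card (Dg (A - {y}))" for y
  have eA2: "y \<in> A \<Longrightarrow> card (A - {y}) = 2" for y using c3 finA by simp
  have Gne: "Dg (A - {y}) \<noteq> {}" if y: "y \<in> A" for y
  proof -
    obtain e where e: "e \<subseteq> A" "card e = 2" "y \<notin> e" "Dg e \<noteq> {}" using C1[OF y] by blast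
    have "e \<subseteq> A - {y}" using e by blast
    then have "e = A - {y}" using card_subset_eq[of "A - {y}" e] finA eA2[OF y] e(2) by simp
    thus ?thesis using e(4) by simp
  qed
  have cross: "D \<inter> D' \<noteq> {}" if "y \<in> A" "y' \<in> A" "y \<noteq> y'" "D \<in> Dg (A - {y})" "D' \<in> Dg (A - {y'})" for y y' D D'
  proof -
    have "(A - {y}) \<union> (A - {y'}) = A" using that by blast
    then show ?thesis using R2[OF that(4,5)] c3 by auto
  qed
  have st: "card {D \<in> Dg (A - {y}). v \<in> D} \<le> 2" if "y \<in> A" "v \<notin> A" for y v
    using star2[of "A - {y}" v] eA2 that by auto
  have st': "card {D \<in> Dg (A - {y}). v \<in> D} \<le> 2" if "y \<in> A" for y v
  proof (cases "v \<in> A")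
    case True
    then have "{D \<in> Dg (A - {y}). v \<in> D} = {}" using DgD by blast
    then show ?thesis by (metis card.empty zero_le)
  next
    case False then show ?thesis using st that by blast
  qed
  have f3: "f y \<le> 3" if y: "y \<in> A" and ne: "N y \<noteq> {}" for y
  proof -
    obtain z where z: "z \<in> N y" using ne by blast
    have sub: "Dg (A - {y}) \<subseteq> {D \<in> Dg (A - {y}). z \<in> D}"
      using R3[OF z _ _ eA2[OF y] y] by blast
    have g2: "card (Dg (A - {y})) \<le> 2" using card_mono[OF _ sub] st'[OF y, of z] finDg by simp
    have n2: "card (N y) \<le> 2" using NNle2[OF y] by simp
    have "card (N y) \<le> 1 \<or> card (Dg (A - {y})) \<le> 1"
    proof (cases "card (N y) = 2")
      case True
      then obtain z1 z2 where zz: "N y = {z1,z2}" "z1 \<noteq> z2" using card_2_iff by metis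
      have "Dg (A - {y}) \<subseteq> {{z1,z2}}"
      proof
        fix D assume D: "D \<in> Dg (A - {y})"
        have "z1 \<in> D" "z2 \<in> D" using R3[OF _ D _ eA2[OF y] y] zz by auto
        moreover have "card D = 2" using DgD D by blast
        ultimately show "D \<in> {{z1,z2}}" using zz(2)
          by (metis card_2_iff doubleton_eq_iff empty_iff insert_iff singleton_iff)
      qed
      then have "card (Dg (A - {y})) \<le> card {{z1,z2}}" by (rule card_mono[rotated]) simp
      then have "card (Dg (A - {y})) \<le> 1" by simp
      then show ?thesis by simp
    next
      case False then show ?thesis using n2 by simp
    qed
    then show ?thesis unfolding f_def using g2 n2 by linarith
  qed
  have g4: "card (Dg (A - {y})) \<le> 4" if y: "y \<in> A" and y': "y' \<in> A" "y' \<noteq> y" for y y'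
  proof -
    obtain D' where D': "D' \<in> Dg (A - {y'})" using Gne[OF y'(1)] by blast
    obtain d1 d2 where d: "D' = {d1,d2}" using DgD[OF D'] card_2_iff by metis
    have "Dg (A - {y}) \<subseteq> {D \<in> Dg (A - {y}). d1 \<in> D} \<union> {D \<in> Dg (A - {y}). d2 \<in> D}"
      using cross[OF y y'(1) y'(2)[symmetric] _ D'] d by blast
    then have "card (Dg (A - {y})) \<le> card ({D \<in> Dg (A - {y}). d1 \<in> D} \<union> {D \<in> Dg (A - {y}). d2 \<in> D})"
      by (rule card_mono[rotated]) (simp add: finDg)
    also have "\<dots> \<le> card {D \<in> Dg (A - {y}). d1 \<in> D} + card {D \<in> Dg (A - {y}). d2 \<in> D}"
      by (rule card_Un_le)
    finally have "card (Dg (A - {y})) \<le> card {D \<in> Dg (A - {y}). d1 \<in> D} + card {D \<in> Dg (A - {y}). d2 \<in> D}" .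
    then show ?thesis using st'[OF y, of d1] st'[OF y, of d2] by linarith
  qed
  have f4: "f y \<le> 4" if y: "y \<in> A" for y
  proof (cases "N y = {}")
    case True
    obtain y' where "y' \<in> A" "y' \<noteq> y" using pqr y by blast
    then show ?thesis unfolding f_def using True g4[OF y] by simp
  next
    case False then show ?thesis using f3[OF y] by simp
  qed
  have f4N: "N y = {} \<and> card (Dg (A - {y})) = 4" if y: "y \<in> A" and "f y = 4" for y
    using f3[OF y] that unfolding f_def by (cases "N y = {}") auto
  have notall: "f p + f q + f r \<le> 11"
  proof (rule ccontr)
    assume "\<not> ?thesis"
    moreover have "f p \<le> 4" "f q \<le> 4" "f r \<le> 4" using f4 pqr(1) by auto
    ultimately have "f p = 4" "f q = 4" "f r = 4" by linarith+
    then have G4: "card (Dg (A - {p})) = 4" "card (Dg (A - {q})) = 4" "card (Dg (A - {r})) = 4"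
      using f4N[of p] f4N[of q] f4N[of r] pqr(1) by auto
    have qA: "q \<in> A" using pqr by simp
    have all2: "\<forall>D\<in>Dg (A - {q}). card D = 2" using DgD by blast
    obtain D1 D2 where DD12: "D1 \<in> Dg (A - {q})" "D2 \<in> Dg (A - {q})" "D1 \<inter> D2 = {}"
      using pairs4[OF finDg all2 st'[OF qA]] G4(2) by auto
    have pA: "p \<in> A" and rA: "r \<in> A" using pqr by simp_all
    have Ycond: "\<forall>D\<in>Dg (A - {p}). card D = 2 \<and> D \<inter> D1 \<noteq> {} \<and> D \<inter> D2 \<noteq> {}"
    proof
      fix D assume D: "D \<in> Dg (A - {p})"
      show "card D = 2 \<and> D \<inter> D1 \<noteq> {} \<and> D \<inter> D2 \<noteq> {}"
        using DgD[OF D] cross[OF pA qA pqr(2) D DD12(1)] cross[OF pA qA pqr(2) D DD12(2)] by blast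
    qed
    have "Dg (A - {r}) \<subseteq> {D1, D2}"
    proof
      fix D assume D: "D \<in> Dg (A - {r})"
      have "\<forall>D'\<in>Dg (A - {p}). D \<inter> D' \<noteq> {}" using cross[OF rA pA pqr(4)[symmetric] D] by blast
      have c1: "card D1 = 2" "card D2 = 2" "card D = 2" using DgD DD12 D by blast+
      show "D \<in> {D1, D2}" using cross4(2)[OF DD12(3) c1(1) c1(2) Ycond G4(1) c1(3) \<open>\<forall>D'\<in>Dg (A - {p}). D \<inter> D' \<noteq> {}\<close>] by blast
    qed
    then have "card (Dg (A - {r})) \<le> card {D1, D2}" by (rule card_mono[rotated]) simp
    also have "\<dots> \<le> 2" by (simp add: card_insert_if)
    finally have "card (Dg (A - {r})) \<le> 2" .
    then show False using G4(3) by simp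
  qed
  define M where "M y = (\<lambda>z. insert z (A - {y})) ` N y \<union> (\<lambda>D. insert y D) ` Dg (A - {y})" for y
  have Mc: "card (M y) \<le> f y" if "y \<in> A" for y
  proof -
    have "card (M y) \<le> card ((\<lambda>z. insert z (A - {y})) ` N y) + card ((\<lambda>D. insert y D) ` Dg (A - {y}))"
      unfolding M_def by (rule card_Un_le)
    also have "\<dots> \<le> f y" unfolding f_def by (intro add_mono card_image_le NNle2 finDg that)
    finally show ?thesis .
  qed
  have sub: "T \<subseteq> {A} \<union> M p \<union> M q \<union> M r"
  proof
    fix C assume C: "C \<in> T"
    consider "C = A" | "\<exists>y\<in>A. \<exists>z\<in>N y. C = insert z (A - {y})" |
      "\<exists>e. e \<subseteq> A \<and> card e = 2 \<and> (\<exists>D\<in>Dg e. C = (A - e) \<union> D)" using decomp[OF C] by blast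
    then show "C \<in> {A} \<union> M p \<union> M q \<union> M r"
    proof cases
      case 1 then show ?thesis by simp
    next
      case 2
      then obtain y z where yz: "y \<in> A" "z \<in> N y" "C = insert z (A - {y})" by blast
      have "C \<in> M y" unfolding M_def using yz by blast
      then show ?thesis using yz(1) pqr(1) by auto
    next
      case 3
      then obtain e D where e: "e \<subseteq> A" "card e = 2" "D \<in> Dg e" "C = (A - e) \<union> D" by blast
      have "card (A - e) = 1" using card_AminusU[OF e(1)] e(2) t1 by simp
      then obtain y where y: "A - e = {y}" using card_1_singletonE by blast
      have ee: "e = A - {y}" using y e(1) by blast
      have "C = insert y D" using e(4) y by simp
      moreover have "y \<in> A" using y by blast
      moreover have "C \<in> M y" unfolding M_def using e(3) ee calculation(1) by blast
      ultimately show ?thesis using pqr(1) by auto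
    qed
  qed
  have "card T \<le> card ({A} \<union> M p \<union> M q \<union> M r)"
  proof (rule card_mono[OF _ sub])
    have finM: "finite (M y)" if "y \<in> A" for y unfolding M_def using NNle2(2)[OF that] finDg by simp
    show "finite ({A} \<union> M p \<union> M q \<union> M r)" using finM pqr(1) by simp
  qed
  also have "\<dots> \<le> card ({A} \<union> M p \<union> M q) + card (M r)" by (rule card_Un_le)
  also have "\<dots> \<le> card ({A} \<union> M p) + card (M q) + card (M r)" using card_Un_le[of "{A} \<union> M p" "M q"] by linarith
  also have "\<dots> \<le> card {A} + card (M p) + card (M q) + card (M r)" using card_Un_le[of "{A}" "M p"] by linarith
  also have "\<dots> = 1 + card (M p) + card (M q) + card (M r)" by simp
  also have "\<dots> \<le> 1 + f p + f q + f r" using Mc pqr by (simp add: add_mono)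
  finally show ?thesis using notall by linarith
qed


lemma pairA: "a \<in> A \<Longrightarrow> b \<in> A \<Longrightarrow> a \<noteq> b \<Longrightarrow> {a,b} \<subseteq> A \<and> card {a,b} = 2"
  by simp

lemma R1':
  assumes "a \<in> A" "b \<in> A" "c \<in> A" "d \<in> A" "distinct [a,b,c,d]"
    "D \<in> Dg {a,b}" "D' \<in> Dg {c,d}"
  shows "D = D'"
  using R1[OF assms(6,7)] assms(1-5) by simp

lemma R2':
  assumes "a \<in> A" "b \<in> A" "c \<in> A" "distinct [a,b,c]"
    "D \<in> Dg {a,b}" "D' \<in> Dg {a,c}"
  shows "D \<inter> D' \<noteq> {}"
proof -
  have "{a,b} \<union> {a,c} = {a,b,c}" by blast
  then have "card ({a,b} \<union> {a,c}) = 3" using assms(4) by simp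
  then show ?thesis using R2[OF assms(5,6)] assms(1-3) by simp
qed

lemma R3':
  assumes "z \<in> N y" "D \<in> Dg {a,b}" "a \<in> A" "b \<in> A" "a \<noteq> b" "y \<in> A" "y \<noteq> a" "y \<noteq> b"
  shows "z \<in> D"
  using R3[OF assms(1,2)] assms(3-8) by simp

lemma star2':
  assumes "a \<in> A" "b \<in> A" "a \<noteq> b" "v \<notin> A"
  shows "card {D \<in> Dg {a,b}. v \<in> D} \<le> 2"
  using star2[of "{a,b}" v] assms by simp

lemma star2'': "card {D \<in> Dg e. v \<in> D} \<le> 2" if "e \<subseteq> A" "card e = 2" for e v
proof (cases "v \<in> A")
  case True
  then have "{D \<in> Dg e. v \<in> D} = {}" using DgD by blast
  then show ?thesis by (metis card.empty zero_le)
next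
  case False then show ?thesis using star2 that by blast
qed

lemma bound3:
  assumes "X \<subseteq> Dg e" "e \<subseteq> A" "card e = 2" "\<forall>D\<in>X. w \<in> D \<or> D = K"
  shows "card X \<le> 3"
proof -
  have "X \<subseteq> {D \<in> Dg e. w \<in> D} \<union> {K}" using assms(1,4) by blast
  then have "card X \<le> card ({D \<in> Dg e. w \<in> D} \<union> {K})" by (rule card_mono[rotated]) (simp add: finDg)
  also have "\<dots> \<le> card {D \<in> Dg e. w \<in> D} + card {K}" by (rule card_Un_le)
  finally show ?thesis using star2''[OF assms(2,3), of w] by simp
qed

lemma meet2:
  assumes "card D = 2" "D \<inter> {w1,w2} \<noteq> {}" "D \<inter> {w1,u} \<noteq> {}" "w1 \<notin> D" "w2 \<noteq> u"
  shows "D = {w2,u}"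
proof -
  have "w2 \<in> D" "u \<in> D" using assms(2,3,4) by blast+
  then show ?thesis using two_in[OF assms(1)] assms(5) by blast
qed

definition (in tfamA) Nmem where "Nmem = (\<Union>y\<in>A. (\<lambda>z. insert z (A - {y})) ` N y)"

lemma finNmem: "finite Nmem"
  unfolding Nmem_def using finA NNle2(2) by simp

lemma caseI_count:
  assumes dist: "p1 \<in> A" "p2 \<in> A" "q1 \<in> A" "q2 \<in> A" "p1 \<noteq> p2" "p1 \<noteq> q1" "p1 \<noteq> q2" "p2 \<noteq> q1" "p2 \<noteq> q2" "q1 \<noteq> q2"
    and wdist: "w1 \<notin> A" "w2 \<notin> A" "u \<notin> A" "w1 \<noteq> w2" "w1 \<noteq> u" "w2 \<noteq> u"
    and D0: "Dg {p1,p2} = {{w1,w2}}" "Dg {q1,q2} = {{w1,w2}}"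
    and Db: "{w1,u} \<in> Dg {p1,q1}"
  shows "card T \<le> 1 + card Nmem + 2 * (t - 1) + card (Dg {p1,q1}) + card (Dg {p1,q2}) + card (Dg {p2,q1}) + card (Dg {p2,q2})"
proof -
  let ?D0 = "{w1,w2}"
  let ?cross = "{{p1,q1},{p1,q2},{p2,q1},{p2,q2}}"
  have crossP: "e' \<in> ?cross" if e': "e' \<subseteq> A" "card e' = 2" "e' \<inter> {p1,p2} \<noteq> {}" "e' \<inter> {q1,q2} \<noteq> {}" for e'
  proof -
    obtain a where a: "a \<in> e'" "a \<in> {p1,p2}" using e'(3) by blast
    obtain b where b: "b \<in> e'" "b \<in> {q1,q2}" using e'(4) by blast
    have "a \<noteq> b" using a b dist by blast
    then have "e' = {a,b}" using two_in[OF e'(2) a(1) b(1)] by simp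
    then show ?thesis using a(2) b(2) by blast
  qed
  have nc: "Dg e' \<subseteq> {?D0}" if e': "e' \<subseteq> A" "card e' = 2" "e' \<notin> ?cross" for e'
  proof
    fix D' assume D': "D' \<in> Dg e'"
    have "e' \<inter> {p1,p2} = {} \<or> e' \<inter> {q1,q2} = {}" using crossP[OF e'(1,2)] e'(3) by blast
    then show "D' \<in> {?D0}"
    proof
      assume "e' \<inter> {p1,p2} = {}"
      then have dj: "e' \<inter> {p1,p2} = {}" .
      have d0: "?D0 \<in> Dg {p1,p2}" using D0(1) by simp
      have pp: "{p1,p2} \<subseteq> A" "card {p1,p2} = 2" using dist by simp_all
      have "D' = ?D0" using R1[OF D' d0 e'(1) pp(1) e'(2) pp(2) dj] .
      then show ?thesis by simp
    next
      assume "e' \<inter> {q1,q2} = {}"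
      then have dj: "e' \<inter> {q1,q2} = {}" .
      have d0: "?D0 \<in> Dg {q1,q2}" using D0(2) by simp
      have pp: "{q1,q2} \<subseteq> A" "card {q1,q2} = 2" using dist by simp_all
      have "D' = ?D0" using R1[OF D' d0 e'(1) pp(1) e'(2) pp(2) dj] .
      then show ?thesis by simp
    qed
  qed
  have nc2: "Dg e' = {}" if e': "e' \<subseteq> A" "card e' = 2" "e' \<notin> ?cross" "e' \<inter> {p1,q1} = {}" for e'
  proof (rule ccontr)
    assume "Dg e' \<noteq> {}"
    then obtain D' where D': "D' \<in> Dg e'" by blast
    have "D' = ?D0" using nc[OF e'(1-3)] D' by blast
    moreover have pp: "{p1,q1} \<subseteq> A" "card {p1,q1} = 2" using dist by simp_all
    moreover have "D' = {w1,u}" using R1[OF D' Db e'(1) pp(1) e'(2) pp(2) e'(4)] .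
    ultimately show False using wdist by (metis doubleton_eq_iff)
  qed
  let ?NC = "(\<lambda>y. (A - {p1,y}) \<union> ?D0) ` (A - {p1,q1,q2}) \<union> (\<lambda>y. (A - {q1,y}) \<union> ?D0) ` (A - {q1,p1,p2})"
  let ?CR = "(\<lambda>D. (A - {p1,q1}) \<union> D) ` Dg {p1,q1} \<union> (\<lambda>D. (A - {p1,q2}) \<union> D) ` Dg {p1,q2} \<union>
             (\<lambda>D. (A - {p2,q1}) \<union> D) ` Dg {p2,q1} \<union> (\<lambda>D. (A - {p2,q2}) \<union> D) ` Dg {p2,q2}"
  have sub: "T \<subseteq> {A} \<union> Nmem \<union> ?NC \<union> ?CR"
  proof
    fix C assume C: "C \<in> T"
    consider "C = A" | "\<exists>y\<in>A. \<exists>z\<in>N y. C = insert z (A - {y})" |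
      "\<exists>e. e \<subseteq> A \<and> card e = 2 \<and> (\<exists>D\<in>Dg e. C = (A - e) \<union> D)" using decomp[OF C] by blast
    then show "C \<in> {A} \<union> Nmem \<union> ?NC \<union> ?CR"
    proof cases
      case 1 then show ?thesis by simp
    next
      case 2
      then obtain y z where yz: "y \<in> A" "z \<in> N y" "C = insert z (A - {y})" by blast
      have "C \<in> Nmem" unfolding Nmem_def using yz by blast
      then show ?thesis by simp
    next
      case 3
      then obtain e' D' where e': "e' \<subseteq> A" "card e' = 2" "D' \<in> Dg e'" "C = (A - e') \<union> D'" by blast
      show ?thesis
      proof (cases "e' \<in> ?cross")
        case True
        then consider "e' = {p1,q1}" | "e' = {p1,q2}" | "e' = {p2,q1}" | "e' = {p2,q2}" by blast
        then have "C \<in> ?CR"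
        proof cases
          case 1 then show ?thesis using e'(3,4) by (intro UnI1 imageI) simp
        next
          case 2 then have "C \<in> (\<lambda>D. (A - {p1,q2}) \<union> D) ` Dg {p1,q2}" using e'(3,4) by simp
          then show ?thesis by (simp only: Un_iff simp_thms)
        next
          case 3 then have "C \<in> (\<lambda>D. (A - {p2,q1}) \<union> D) ` Dg {p2,q1}" using e'(3,4) by simp
          then show ?thesis by (simp only: Un_iff simp_thms)
        next
          case 4 then have "C \<in> (\<lambda>D. (A - {p2,q2}) \<union> D) ` Dg {p2,q2}" using e'(3,4) by simp
          then show ?thesis by (simp only: Un_iff simp_thms)
        qed
        then show ?thesis by (simp only: Un_iff simp_thms)
      next
        case False
        have DD0: "D' = ?D0" using nc[OF e'(1,2) False] e'(3) by blast
        have mt: "e' \<inter> {p1,q1} \<noteq> {}" using nc2[OF e'(1,2) False] e'(3) by blast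
        obtain a b where ab: "e' = {a,b}" "a \<noteq> b" using e'(2) card_2_iff by metis
        have "C \<in> ?NC"
        proof (cases "p1 \<in> e'")
          case True
          then have "p1 = a \<or> p1 = b" using ab by simp
          then obtain y where y: "e' = {p1,y}"
          proof
            assume "p1 = a" then show ?thesis using ab that by blast
          next
            assume "p1 = b" then have "e' = {p1,a}" using ab by blast
            then show ?thesis using that by blast
          qed
          have yA: "y \<in> A" using y e'(1) by simp
          have "y \<noteq> q1" using y False by blast
          moreover have "y \<noteq> q2" using y False by blast
          moreover have "y \<noteq> p1" using y e'(2) by (cases "y = p1") auto
          ultimately have yy: "y \<in> A - {p1,q1,q2}" using yA by simp
          have "C = (A - {p1,y}) \<union> ?D0" using e'(4) DD0 y by simp
          then have "C \<in> (\<lambda>y. (A - {p1,y}) \<union> ?D0) ` (A - {p1,q1,q2})" using yy by blast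
          then show ?thesis by (simp only: Un_iff simp_thms)
        next
          case pF: False
          then have "q1 \<in> e'" using mt by blast
          then have "q1 = a \<or> q1 = b" using ab by simp
          then obtain y where y: "e' = {q1,y}"
          proof
            assume "q1 = a" then show ?thesis using ab that by blast
          next
            assume "q1 = b" then have "e' = {q1,a}" using ab by blast
            then show ?thesis using that by blast
          qed
          have yA: "y \<in> A" using y e'(1) by simp
          have "y \<noteq> p1" using y pF by blast
          moreover have "y \<noteq> p2" using y False by blast
          moreover have "y \<noteq> q1" using y e'(2) by (cases "y = q1") auto
          ultimately have yy: "y \<in> A - {q1,p1,p2}" using yA by simp
          have "C = (A - {q1,y}) \<union> ?D0" using e'(4) DD0 y by simp
          then have "C \<in> (\<lambda>y. (A - {q1,y}) \<union> ?D0) ` (A - {q1,p1,p2})" using yy by blast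
          then show ?thesis by (simp only: Un_iff simp_thms)
        qed
        then show ?thesis by (simp only: Un_iff simp_thms)
      qed
    qed
  qed
  have finNC: "finite ?NC" using finA by simp
  have finCR: "finite ?CR" using finDg by simp
  have cNC: "card ?NC \<le> 2 * (t - 1)"
  proof -
    have c1: "card (A - {p1,q1,q2}) = t - 1" using card_AminusU[of "{p1,q1,q2}"] dist by simp
    have c2: "card (A - {q1,p1,p2}) = t - 1" using card_AminusU[of "{q1,p1,p2}"] dist by simp
    have "card ?NC \<le> card ((\<lambda>y. (A - {p1,y}) \<union> ?D0) ` (A - {p1,q1,q2})) + card ((\<lambda>y. (A - {q1,y}) \<union> ?D0) ` (A - {q1,p1,p2}))"
      by (rule card_Un_le)
    also have "\<dots> \<le> card (A - {p1,q1,q2}) + card (A - {q1,p1,p2})"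
      by (intro add_mono card_image_le) (simp_all add: finA)
    finally show ?thesis using c1 c2 by simp
  qed
  have cCR: "card ?CR \<le> card (Dg {p1,q1}) + card (Dg {p1,q2}) + card (Dg {p2,q1}) + card (Dg {p2,q2})"
  proof -
    have i: "card ((\<lambda>D. (A - c) \<union> D) ` Dg c) \<le> card (Dg c)" for c by (rule card_image_le) (simp add: finDg)
    have "card ?CR \<le> card ((\<lambda>D. (A - {p1,q1}) \<union> D) ` Dg {p1,q1} \<union> (\<lambda>D. (A - {p1,q2}) \<union> D) ` Dg {p1,q2} \<union>
             (\<lambda>D. (A - {p2,q1}) \<union> D) ` Dg {p2,q1}) + card ((\<lambda>D. (A - {p2,q2}) \<union> D) ` Dg {p2,q2})"
      by (rule card_Un_le)
    also have "\<dots> \<le> card ((\<lambda>D. (A - {p1,q1}) \<union> D) ` Dg {p1,q1} \<union> (\<lambda>D. (A - {p1,q2}) \<union> D) ` Dg {p1,q2}) +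
             card ((\<lambda>D. (A - {p2,q1}) \<union> D) ` Dg {p2,q1}) + card ((\<lambda>D. (A - {p2,q2}) \<union> D) ` Dg {p2,q2})"
      using card_Un_le[of "(\<lambda>D. (A - {p1,q1}) \<union> D) ` Dg {p1,q1} \<union> (\<lambda>D. (A - {p1,q2}) \<union> D) ` Dg {p1,q2}" "(\<lambda>D. (A - {p2,q1}) \<union> D) ` Dg {p2,q1}"] by linarith
    also have "\<dots> \<le> card ((\<lambda>D. (A - {p1,q1}) \<union> D) ` Dg {p1,q1}) + card ((\<lambda>D. (A - {p1,q2}) \<union> D) ` Dg {p1,q2}) +
             card ((\<lambda>D. (A - {p2,q1}) \<union> D) ` Dg {p2,q1}) + card ((\<lambda>D. (A - {p2,q2}) \<union> D) ` Dg {p2,q2})"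
      using card_Un_le[of "(\<lambda>D. (A - {p1,q1}) \<union> D) ` Dg {p1,q1}" "(\<lambda>D. (A - {p1,q2}) \<union> D) ` Dg {p1,q2}"] by linarith
    also have "\<dots> \<le> card (Dg {p1,q1}) + card (Dg {p1,q2}) + card (Dg {p2,q1}) + card (Dg {p2,q2})"
      using i[of "{p1,q1}"] i[of "{p1,q2}"] i[of "{p2,q1}"] i[of "{p2,q2}"] by linarith
    finally show ?thesis .
  qed
  have "card T \<le> card ({A} \<union> Nmem \<union> ?NC \<union> ?CR)"
    by (rule card_mono[OF _ sub]) (rule finite_UnI[OF finite_UnI[OF finite_UnI[OF _ finNmem] finNC] finCR], simp)
  also have "\<dots> \<le> card ({A} \<union> Nmem \<union> ?NC) + card ?CR" by (rule card_Un_le)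
  also have "\<dots> \<le> card ({A} \<union> Nmem) + card ?NC + card ?CR" using card_Un_le[of "{A} \<union> Nmem" ?NC] by linarith
  also have "\<dots> \<le> 1 + card Nmem + card ?NC + card ?CR" using card_Un_le[of "{A}" Nmem] by simp
  finally show ?thesis using cNC cCR by linarith
qed


lemma blocker:
  assumes e: "e \<subseteq> A" "card e = 2" and v: "v \<notin> A" "v \<in> G"
  shows "(\<exists>y\<in>A. y \<notin> e \<and> (\<exists>z\<in>N y. z \<noteq> v)) \<or>
         (\<exists>e' D'. e' \<subseteq> A \<and> card e' = 2 \<and> D' \<in> Dg e' \<and> (e \<inter> e' = {} \<or> (card (e \<union> e') = 3 \<and> v \<notin> D')))"
proof -
  have fe: "finite e" using e(2) card.infinite by fastforce
  have cAe: "card (A - e) = t" using card_AminusU[OF e(1)] e(2) by simp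
  have S: "insert v (A - e) \<subseteq> G" "card (insert v (A - e)) = t + 1"
    using AG v e finA cAe by auto
  obtain C where C: "C \<in> T" "card (insert v (A - e) \<inter> C) < t" using nocov[OF S] by blast
  have fC: "finite C" using memfin[OF C(1)] .
  have low: "card X \<le> card (insert v (A - e) \<inter> C)" if "X \<subseteq> insert v (A - e) \<inter> C" for X
    using card_mono[OF _ that] fC by simp
  consider "C = A" | "\<exists>y\<in>A. \<exists>z\<in>N y. C = insert z (A - {y})" |
      "\<exists>e'. e' \<subseteq> A \<and> card e' = 2 \<and> (\<exists>D\<in>Dg e'. C = (A - e') \<union> D)" using decomp[OF C(1)] by blast
  then show ?thesis
  proof cases
    case 1
    then have sb: "A - e \<subseteq> insert v (A - e) \<inter> C" by blast
    show ?thesis using low[OF sb] C(2) cAe by simp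
  next
    case 2
    then obtain y z where yz: "y \<in> A" "z \<in> N y" "C = insert z (A - {y})" by blast
    have ye: "y \<notin> e"
    proof
      assume "y \<in> e"
      then have sb: "A - e \<subseteq> insert v (A - e) \<inter> C" using yz(3) by blast
      show False using low[OF sb] C(2) cAe by simp
    qed
    have "z \<noteq> v"
    proof
      assume zv: "z = v"
      have "insert v (A - insert y e) \<subseteq> insert v (A - e) \<inter> C" using yz(3) zv by blast
      moreover have "card (insert v (A - insert y e)) = t"
      proof -
        have "card (insert y e) = 3" using ye fe e(2) by simp
        then have "card (A - insert y e) = t - 1" using card_AminusU[of "insert y e"] e(1) yz(1) by simp
        then show ?thesis using v(1) finA tpos by simp
      qed
      ultimately show False using low C(2) by (metis not_le)
    qed
    then show ?thesis using yz ye by blast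
  next
    case 3
    then obtain e' D' where e': "e' \<subseteq> A" "card e' = 2" "D' \<in> Dg e'" "C = (A - e') \<union> D'" by blast
    have fe': "finite e'" using e'(2) card.infinite by fastforce
    show ?thesis
    proof (cases "e \<inter> e' = {}")
      case True then show ?thesis using e' by blast
    next
      case False
      have cu: "card (e \<union> e') = card e + card e' - card (e \<inter> e')"
        using card_Un_Int[OF fe fe'] by simp
      have ci: "card (e \<inter> e') \<ge> 1" using False fe by (simp add: Suc_leI card_gt_0_iff)
      have ci2: "card (e \<inter> e') \<le> 2" using card_mono[OF fe, of "e \<inter> e'"] e(2) by simp
      show ?thesis
      proof (cases "card (e \<inter> e') = 2")
        case True
        then have "e \<inter> e' = e" using card_subset_eq[OF fe, of "e \<inter> e'"] e(2) by simp
        moreover have "e \<inter> e' = e'" using card_subset_eq[OF fe', of "e \<inter> e'"] e'(2) True by simp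
        ultimately have "e = e'" by simp
        then have sb: "A - e \<subseteq> insert v (A - e) \<inter> C" using e'(4) by blast
        show ?thesis using low[OF sb] C(2) cAe by simp
      next
        case ne2: False
        then have c3: "card (e \<union> e') = 3" using cu ci ci2 e(2) e'(2) by simp
        have "v \<notin> D'"
        proof
          assume vD: "v \<in> D'"
          have "insert v (A - (e \<union> e')) \<subseteq> insert v (A - e) \<inter> C" using e'(4) vD by blast
          moreover have "card (insert v (A - (e \<union> e'))) = t"
          proof -
            have "card (A - (e \<union> e')) = t - 1" using card_AminusU[of "e \<union> e'"] e(1) e'(1) c3 by simp
            then show ?thesis using v(1) finA tpos by simp
          qed
          ultimately show False using low C(2) by (metis not_le)
        qed
        then show ?thesis using e' c3 by blast
      qed
    qed
  qed
qed

lemma sum_disj: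
  assumes "card (Dg e) \<le> 3" "card (Dg e') \<le> 3" "\<And>D D'. D \<in> Dg e \<Longrightarrow> D' \<in> Dg e' \<Longrightarrow> D = D'"
  shows "card (Dg e) + card (Dg e') \<le> 3"
proof (cases "Dg e = {} \<or> Dg e' = {}")
  case True then show ?thesis using assms(1,2) by auto
next
  case False
  then obtain D D' where D: "D \<in> Dg e" "D' \<in> Dg e'" by blast
  have "Dg e \<subseteq> {D'}" using assms(3) D(2) by blast
  then have "card (Dg e) \<le> card {D'}" by (rule card_mono[rotated]) simp
  moreover have "Dg e' \<subseteq> {D}" using assms(3) D(1) by blast
  then have "card (Dg e') \<le> card {D}" by (rule card_mono[rotated]) simp
  ultimately show ?thesis by simp
qed

end

locale caseI = tfamA +
  fixes p1 p2 q1 q2 w1 w2 u :: nat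
  assumes dist: "p1 \<in> A" "p2 \<in> A" "q1 \<in> A" "q2 \<in> A" "p1 \<noteq> p2" "p1 \<noteq> q1" "p1 \<noteq> q2" "p2 \<noteq> q1" "p2 \<noteq> q2" "q1 \<noteq> q2"
    and wdist: "w1 \<notin> A" "w2 \<notin> A" "u \<notin> A" "w1 \<noteq> w2" "w1 \<noteq> u" "w2 \<noteq> u"
    and D0: "Dg {p1,p2} = {{w1,w2}}" "Dg {q1,q2} = {{w1,w2}}"
    and Db: "{w1,u} \<in> Dg {p1,q1}"
begin

lemma cnt: "card T \<le> 1 + card Nmem + 2 * (t - 1) + card (Dg {p1,q1}) + card (Dg {p1,q2}) + card (Dg {p2,q1}) + card (Dg {p2,q2})"
  using caseI_count[OF dist wdist D0 Db] .

lemma d0in: "{w1,w2} \<in> Dg {p1,p2}" "{w1,w2} \<in> Dg {q1,q2}" "{w1,w2} \<in> Dg {p2,p1}" "{w1,w2} \<in> Dg {q2,q1}"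
  using D0 by (simp_all add: insert_commute)

lemma Dbc: "{w1,u} \<in> Dg {q1,p1}" using Db by (simp add: insert_commute)

lemma dists: "distinct [p1,q1,p2,q2]" "distinct [p1,q2,p2,q1]" "distinct [p2,q1,p1,q2]"
  "distinct [p1,q2,p2]" "distinct [p1,q2,q1]" "distinct [p2,q1,p1]" "distinct [p2,q1,q2]"
  "distinct [p1,q1,p2]" "distinct [p1,q1,q2]" "distinct [q1,p2,p1]"
  using dist by auto

lemmas dA = dists(1) and dB = dists(2) and dC = dists(3) and dt1 = dists(4) and dt2 = dists(5)
  and dt3 = dists(6) and dt4 = dists(7) and dt5 = dists(8) and dt6 = dists(9) and dt7 = dists(10)

lemma NinD0: assumes "z \<in> N y" "y \<in> A" shows "z = w1 \<or> z = w2"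
proof (cases "y \<noteq> p1 \<and> y \<noteq> p2")
  case True
  then have "z \<in> {w1,w2}" using R3'[OF assms(1) d0in(1) dist(1,2,5) assms(2)] by blast
  then show ?thesis by simp
next
  case False
  then have "y \<noteq> q1 \<and> y \<noteq> q2" using dist by blast
  then have "z \<in> {w1,w2}" using R3'[OF assms(1) d0in(2) dist(3,4,10) assms(2)] by blast
  then show ?thesis by simp
qed

lemma Nw1: assumes "z \<in> N y" "y \<in> A" "y \<noteq> p1" "y \<noteq> q1" shows "z = w1"
proof -
  have "z \<in> {w1,u}" using R3'[OF assms(1) Db dist(1,3,6) assms(2-4)] .
  then show ?thesis using NinD0[OF assms(1,2)] wdist by blast
qed

lemma Nimg: "y \<in> A \<Longrightarrow> card ((\<lambda>z. insert z (A - {y})) ` N y) \<le> 2"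
  using card_image_le[OF NNle2(2), of y "\<lambda>z. insert z (A - {y})"] NNle2(1)[of y] by linarith

lemma cross_or:
  assumes "e' \<subseteq> A" "card e' = 2" "e' \<inter> {p1,p2} \<noteq> {}" "e' \<inter> {q1,q2} \<noteq> {}"
  shows "e' = {p1,q1} \<or> e' = {p1,q2} \<or> e' = {p2,q1} \<or> e' = {p2,q2}"
proof -
  obtain a where a: "a \<in> e'" "a \<in> {p1,p2}" using assms(3) by blast
  obtain b where b: "b \<in> e'" "b \<in> {q1,q2}" using assms(4) by blast
  have "a \<noteq> b" using a b dist by blast
  then have "e' = {a,b}" using two_in[OF assms(2) a(1) b(1)] by simp
  then show ?thesis using a(2) b(2) by blast
qed

lemma ncD: assumes "e' \<subseteq> A" "card e' = 2" "\<not> (e' = {p1,q1} \<or> e' = {p1,q2} \<or> e' = {p2,q1} \<or> e' = {p2,q2})" "D' \<in> Dg e'"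
  shows "D' = {w1,w2}"
proof -
  have "e' \<inter> {p1,p2} = {} \<or> e' \<inter> {q1,q2} = {}" using cross_or[OF assms(1,2)] assms(3) by blast
  then show ?thesis
  proof
    assume dj: "e' \<inter> {p1,p2} = {}"
    have pp: "{p1,p2} \<subseteq> A" "card {p1,p2} = 2" using dist by simp_all
    show ?thesis using R1[OF assms(4) d0in(1) assms(1) pp(1) assms(2) pp(2) dj] .
  next
    assume dj: "e' \<inter> {q1,q2} = {}"
    have pp: "{q1,q2} \<subseteq> A" "card {q1,q2} = 2" using dist by simp_all
    show ?thesis using R1[OF assms(4) d0in(2) assms(1) pp(1) assms(2) pp(2) dj] .
  qed
qed

lemma nc2D: assumes "e' \<subseteq> A" "card e' = 2" "\<not> (e' = {p1,q1} \<or> e' = {p1,q2} \<or> e' = {p2,q1} \<or> e' = {p2,q2})" "D' \<in> Dg e'"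
   "e' \<inter> {p1,q1} = {}"
  shows False
proof -
  have "D' = {w1,w2}" using ncD[OF assms(1-4)] .
  moreover have pp: "{p1,q1} \<subseteq> A" "card {p1,q1} = 2" using dist by simp_all
  moreover have "D' = {w1,u}" using R1[OF assms(4) Db assms(1) pp(1) assms(2) pp(2) assms(5)] .
  ultimately show False using wdist by (metis doubleton_eq_iff)
qed

lemma caseI_i:
  assumes ne: "Dg {p2,q2} \<noteq> {}" and t2: "2 \<le> t"
  shows "card T \<le> 3 * t + 8"
proof -
  obtain D4 where D4: "D4 \<in> Dg {p2,q2}" using ne by blast
  have r14: "D = D'" if "D \<in> Dg {p1,q1}" "D' \<in> Dg {p2,q2}" for D D'
    using R1'[OF dist(1,3,2,4) dA that] .
  have D4eq: "D4 = {w1,u}" using r14[OF Db D4] by simp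
  have c1: "card (Dg {p1,q1}) \<le> 1"
  proof -
    have "Dg {p1,q1} \<subseteq> {D4}" using r14 D4 by blast
    then have "card (Dg {p1,q1}) \<le> card {D4}" by (rule card_mono[rotated]) simp
    then show ?thesis by simp
  qed
  have c4: "card (Dg {p2,q2}) \<le> 1"
  proof -
    have "Dg {p2,q2} \<subseteq> {{w1,u}}" using r14[OF Db] by blast
    then have "card (Dg {p2,q2}) \<le> card {{w1,u}}" by (rule card_mono[rotated]) simp
    then show ?thesis by simp
  qed
  have c2: "card (Dg {p1,q2}) \<le> 3"
  proof (rule bound3[of _ "{p1,q2}" w1 "{w2,u}"])
    show "{p1,q2} \<subseteq> A" "card {p1,q2} = 2" using dist by simp_all
    show "\<forall>D\<in>Dg {p1,q2}. w1 \<in> D \<or> D = {w2,u}"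
    proof
      fix D assume D: "D \<in> Dg {p1,q2}"
      have m1: "D \<inter> {w1,w2} \<noteq> {}" using R2'[OF dist(1,4,2) dt1 D d0in(1)] .
      have m2: "D \<inter> {w1,u} \<noteq> {}" using R2'[OF dist(1,4,3) dt2 D Db] .
      show "w1 \<in> D \<or> D = {w2,u}" using meet2[OF _ m1 m2 _ wdist(6)] DgD[OF D] by blast
    qed
  qed simp
  have c3: "card (Dg {p2,q1}) \<le> 3"
  proof (rule bound3[of _ "{p2,q1}" w1 "{w2,u}"])
    show "{p2,q1} \<subseteq> A" "card {p2,q1} = 2" using dist by simp_all
    show "\<forall>D\<in>Dg {p2,q1}. w1 \<in> D \<or> D = {w2,u}"
    proof
      fix D assume D: "D \<in> Dg {p2,q1}"
      have m1: "D \<inter> {w1,w2} \<noteq> {}" using R2'[OF dist(2,3,1) dt3 D d0in(3)] .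
      have D4': "{w1,u} \<in> Dg {p2,q2}" using D4 D4eq by simp
      have m2: "D \<inter> {w1,u} \<noteq> {}" using R2'[OF dist(2,3,4) dt4 D D4'] .
      show "w1 \<in> D \<or> D = {w2,u}" using meet2[OF _ m1 m2 _ wdist(6)] DgD[OF D] by blast
    qed
  qed simp
  have c23: "card (Dg {p1,q2}) + card (Dg {p2,q1}) \<le> 3"
    using sum_disj[OF c2 c3] R1'[OF dist(1,4,2,3) dB] by blast
  have Nsub: "Nmem \<subseteq> (\<lambda>z. insert z (A - {p1})) ` N p1 \<union> (\<lambda>z. insert z (A - {q1})) ` N q1 \<union> (\<lambda>y. insert w1 (A - {y})) ` (A - {p1,q1})"
  proof
    fix C assume "C \<in> Nmem"
    then obtain y z where yz: "y \<in> A" "z \<in> N y" "C = insert z (A - {y})" unfolding Nmem_def by blast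
    show "C \<in> (\<lambda>z. insert z (A - {p1})) ` N p1 \<union> (\<lambda>z. insert z (A - {q1})) ` N q1 \<union> (\<lambda>y. insert w1 (A - {y})) ` (A - {p1,q1})"
    proof (cases "y = p1 \<or> y = q1")
      case True then show ?thesis using yz by blast
    next
      case False
      then have "z = w1" using Nw1[OF yz(2,1)] by blast
      then show ?thesis using yz False by blast
    qed
  qed
  have cN: "card Nmem \<le> t + 4"
  proof -
    have "card Nmem \<le> card ((\<lambda>z. insert z (A - {p1})) ` N p1 \<union> (\<lambda>z. insert z (A - {q1})) ` N q1 \<union> (\<lambda>y. insert w1 (A - {y})) ` (A - {p1,q1}))"
      by (rule card_mono[OF _ Nsub]) (simp add: NNle2(2) dist finA)
    also have "\<dots> \<le> card ((\<lambda>z. insert z (A - {p1})) ` N p1 \<union> (\<lambda>z. insert z (A - {q1})) ` N q1) + card ((\<lambda>y. insert w1 (A - {y})) ` (A - {p1,q1}))"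
      by (rule card_Un_le)
    also have "\<dots> \<le> card ((\<lambda>z. insert z (A - {p1})) ` N p1) + card ((\<lambda>z. insert z (A - {q1})) ` N q1) + card (A - {p1,q1})"
      using card_Un_le[of "(\<lambda>z. insert z (A - {p1})) ` N p1" "(\<lambda>z. insert z (A - {q1})) ` N q1"]
        card_image_le[OF finite_Diff[OF finA], of "\<lambda>y. insert w1 (A - {y})" "{p1,q1}"] by linarith
    also have "\<dots> \<le> 2 + 2 + t" using Nimg[OF dist(1)] Nimg[OF dist(3)] card_AminusU[of "{p1,q1}"] dist by simp
    finally show ?thesis by simp
  qed
  show ?thesis using cnt cN c1 c4 c23 t2 by linarith
qed

lemma caseI_ii:
  assumes Dc: "{w2,u} \<in> Dg {p1,q2}" and Dn: "Dg {p2,q2} = {}" and t2: "2 \<le> t"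
  shows "card T \<le> 2 * t + 9"
proof -
  have Nw2: "z = w2" if "z \<in> N y" "y \<in> A" "y \<noteq> p1" "y \<noteq> q2" for z y
  proof -
    have "z \<in> {w2,u}" using R3'[OF that(1) Dc dist(1,4,7) that(2-4)] .
    then show ?thesis using NinD0[OF that(1,2)] wdist by blast
  qed
  have Nsub: "Nmem \<subseteq> (\<lambda>z. insert z (A - {p1})) ` N p1 \<union> {insert w2 (A - {q1}), insert w1 (A - {q2})}"
  proof
    fix C assume "C \<in> Nmem"
    then obtain y z where yz: "y \<in> A" "z \<in> N y" "C = insert z (A - {y})" unfolding Nmem_def by blast
    show "C \<in> (\<lambda>z. insert z (A - {p1})) ` N p1 \<union> {insert w2 (A - {q1}), insert w1 (A - {q2})}"
    proof (cases "y = p1")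
      case True then show ?thesis using yz by blast
    next
      case F1: False
      show ?thesis
      proof (cases "y = q1")
        case True
        then have "z = w2" using Nw2[OF yz(2,1) F1] dist by blast
        then show ?thesis using yz True by blast
      next
        case F2: False
        have zw1: "z = w1" using Nw1[OF yz(2,1) F1 F2] .
        show ?thesis
        proof (cases "y = q2")
          case True then show ?thesis using yz zw1 by blast
        next
          case False
          then have "z = w2" using Nw2[OF yz(2,1) F1] by blast
          then show ?thesis using zw1 wdist by simp
        qed
      qed
    qed
  qed
  have cN: "card Nmem \<le> 4"
  proof -
    have "card Nmem \<le> card ((\<lambda>z. insert z (A - {p1})) ` N p1 \<union> {insert w2 (A - {q1}), insert w1 (A - {q2})})"
      by (rule card_mono[OF _ Nsub]) (simp add: NNle2(2) dist)
    also have "\<dots> \<le> card ((\<lambda>z. insert z (A - {p1})) ` N p1) + card {insert w2 (A - {q1}), insert w1 (A - {q2})}"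
      by (rule card_Un_le)
    also have "\<dots> \<le> 2 + 2" using Nimg[OF dist(1)] card_insert_le_m1 by (simp add: card_insert_if)
    finally show ?thesis by simp
  qed
  have c1: "card (Dg {p1,q1}) \<le> 3"
  proof (rule bound3[of _ "{p1,q1}" w2 "{w1,u}"])
    show "{p1,q1} \<subseteq> A" "card {p1,q1} = 2" using dist by simp_all
    show "\<forall>D\<in>Dg {p1,q1}. w2 \<in> D \<or> D = {w1,u}"
    proof
      fix D assume D: "D \<in> Dg {p1,q1}"
      have m1: "D \<inter> {w2,w1} \<noteq> {}" using R2'[OF dist(1,3,2) dt5 D d0in(1)] by blast
      have m2: "D \<inter> {w2,u} \<noteq> {}" using R2'[OF dist(1,3,4) dt6 D Dc] .
      show "w2 \<in> D \<or> D = {w1,u}" using meet2[OF _ m1 m2 _ wdist(5)] DgD[OF D] by blast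
    qed
  qed simp
  have c2: "card (Dg {p1,q2}) \<le> 3"
  proof (rule bound3[of _ "{p1,q2}" w1 "{w2,u}"])
    show "{p1,q2} \<subseteq> A" "card {p1,q2} = 2" using dist by simp_all
    show "\<forall>D\<in>Dg {p1,q2}. w1 \<in> D \<or> D = {w2,u}"
    proof
      fix D assume D: "D \<in> Dg {p1,q2}"
      have m1: "D \<inter> {w1,w2} \<noteq> {}" using R2'[OF dist(1,4,2) dt1 D d0in(1)] .
      have m2: "D \<inter> {w1,u} \<noteq> {}" using R2'[OF dist(1,4,3) dt2 D Db] .
      show "w1 \<in> D \<or> D = {w2,u}" using meet2[OF _ m1 m2 _ wdist(6)] DgD[OF D] by blast
    qed
  qed simp
  have c3: "card (Dg {p2,q1}) \<le> 3"
  proof -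
    have "Dg {p2,q1} \<subseteq> {{w2,u}}" using R1'[OF dist(2,3,1,4) dC _ Dc] by blast
    then have "card (Dg {p2,q1}) \<le> card {{w2,u}}" by (rule card_mono[rotated]) simp
    then show ?thesis by simp
  qed
  have c23: "card (Dg {p1,q2}) + card (Dg {p2,q1}) \<le> 3"
    using sum_disj[OF c2 c3] R1'[OF dist(1,4,2,3) dB] by blast
  show ?thesis using cnt cN c1 c23 Dn t2 by simp
qed

lemma caseI_dich:
  assumes Dn: "Dg {p2,q2} = {}"
  shows "{w2,u} \<in> Dg {p1,q2} \<or> {w2,u} \<in> Dg {p2,q1}"
proof -
  have w1G: "w1 \<in> G" using DgD[OF d0in(1)] memb by blast
  have pp: "{p1,q1} \<subseteq> A" "card {p1,q1} = 2" using dist by simp_all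
  have "(\<exists>y\<in>A. y \<notin> {p1,q1} \<and> (\<exists>z\<in>N y. z \<noteq> w1)) \<or>
         (\<exists>e' D'. e' \<subseteq> A \<and> card e' = 2 \<and> D' \<in> Dg e' \<and> ({p1,q1} \<inter> e' = {} \<or> (card ({p1,q1} \<union> e') = 3 \<and> w1 \<notin> D')))"
    using blocker[OF pp wdist(1) w1G] .
  then show ?thesis
  proof
    assume "\<exists>y\<in>A. y \<notin> {p1,q1} \<and> (\<exists>z\<in>N y. z \<noteq> w1)"
    then obtain y z where "y \<in> A" "y \<noteq> p1" "y \<noteq> q1" "z \<in> N y" "z \<noteq> w1" by blast
    then show ?thesis using Nw1 by blast
  next
    assume "\<exists>e' D'. e' \<subseteq> A \<and> card e' = 2 \<and> D' \<in> Dg e' \<and> ({p1,q1} \<inter> e' = {} \<or> (card ({p1,q1} \<union> e') = 3 \<and> w1 \<notin> D'))"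
    then obtain e' D' where e': "e' \<subseteq> A" "card e' = 2" "D' \<in> Dg e'" "{p1,q1} \<inter> e' = {} \<or> (card ({p1,q1} \<union> e') = 3 \<and> w1 \<notin> D')"
      by blast
    show ?thesis
    proof (cases "e' = {p1,q1} \<or> e' = {p1,q2} \<or> e' = {p2,q1} \<or> e' = {p2,q2}")
      case False
      have "D' = {w1,w2}" using ncD[OF e'(1,2) False e'(3)] .
      moreover have "e' \<inter> {p1,q1} \<noteq> {}" using nc2D[OF e'(1,2) False e'(3)] by blast
      ultimately show ?thesis using e'(4) by blast
    next
      case True
      then consider "e' = {p1,q1}" | "e' = {p1,q2}" | "e' = {p2,q1}" | "e' = {p2,q2}" by blast
      then show ?thesis
      proof cases
        case 1 then show ?thesis using e'(4) dist by simp
      next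
        case 2
        then have c3: "card ({p1,q1} \<union> e') = 3" and w: "w1 \<notin> D'" using e'(4) dist by auto
        have D: "D' \<in> Dg {p1,q2}" using e'(3) 2 by simp
        have m1: "D' \<inter> {w1,w2} \<noteq> {}" using R2'[OF dist(1,4,2) dt1 D d0in(1)] .
        have m2: "D' \<inter> {w1,u} \<noteq> {}" using R2'[OF dist(1,4,3) dt2 D Db] .
        have "D' = {w2,u}" using meet2[OF _ m1 m2 w wdist(6)] DgD[OF D] by blast
        then show ?thesis using D by simp
      next
        case 3
        then have c3: "card ({p1,q1} \<union> e') = 3" and w: "w1 \<notin> D'" using e'(4) dist by auto
        have D: "D' \<in> Dg {p2,q1}" using e'(3) 3 by simp
        have m1: "D' \<inter> {w1,w2} \<noteq> {}" using R2'[OF dist(2,3,1) dt3 D d0in(3)] .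
        have D': "D' \<in> Dg {q1,p2}" using D by (simp add: insert_commute)
        have m2: "D' \<inter> {w1,u} \<noteq> {}" using R2'[OF dist(3,2,1) dt7 D' Dbc] .
        have "D' = {w2,u}" using meet2[OF _ m1 m2 w wdist(6)] DgD[OF D] by blast
        then show ?thesis using D by simp
      next
        case 4 then show ?thesis using e'(3) Dn by simp
      qed
    qed
  qed
qed


lemma caseI_all:
  assumes t2: "2 \<le> t"
  shows "card T \<le> 3 * t + 8"
proof (cases "Dg {p2,q2} = {}")
  case False then show ?thesis using caseI_i t2 by blast
next
  case True
  from caseI_dich[OF True] show ?thesis
  proof
    assume "{w2,u} \<in> Dg {p1,q2}"
    then show ?thesis using caseI_ii[OF _ True t2] t2 by linarith
  next
    assume h: "{w2,u} \<in> Dg {p2,q1}"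
    have ci: "caseI G t T A q1 q2 p1 p2 w1 w2 u"
      unfolding caseI_def caseI_axioms_def using tfamA_axioms dist wdist D0 Dbc by auto
    have h': "{w2,u} \<in> Dg {q1,p2}" using h by (simp add: insert_commute)
    have T': "Dg {q2,p2} = {}" using True by (simp add: insert_commute)
    show ?thesis using caseI.caseI_ii[OF ci h' T' t2] t2 by linarith
  qed
qed

end

lemma choose_bound: "2 \<le> t \<Longrightarrow> 3 * t + 9 \<le> (t + 4) choose 2"
proof -
  assume t: "2 \<le> t"
  define s where "s = t * t"
  have tt: "4 \<le> s" unfolding s_def using mult_le_mono[OF t t] by simp
  have e: "(t + 4) * (t + 3) = s + 7 * t + 12" unfolding s_def by (simp add: algebra_simps)
  have "6 * t + 18 \<le> s + 7 * t + 12" using tt t by linarith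
  then have "(3 * t + 9) * 2 \<le> (t + 4) * (t + 3)" using e by simp
  then have "3 * t + 9 \<le> (t + 4) * (t + 3) div 2" by (simp add: less_eq_div_iff_mult_less_eq)
  moreover have "(t + 4) choose 2 = (t + 4) * (t + 3) div 2" by (simp add: choose_two algebra_simps)
  ultimately show ?thesis by simp
qed

context tfamA
begin

lemma caseII:
  assumes t2: "2 \<le> t"
    and nodisj: "\<And>e1 e2. e1 \<subseteq> A \<Longrightarrow> card e1 = 2 \<Longrightarrow> Dg e1 \<noteq> {} \<Longrightarrow> e2 \<subseteq> A \<Longrightarrow> card e2 = 2 \<Longrightarrow> Dg e2 \<noteq> {} \<Longrightarrow> e1 \<inter> e2 \<noteq> {}"
  shows "card T \<le> 3 * t + 8"
proof -
  have Ane: "A \<noteq> {}" using cardA by auto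
  then obtain y0 where y0A: "y0 \<in> A" by blast
  obtain e0 where e0: "e0 \<subseteq> A" "card e0 = 2" "Dg e0 \<noteq> {}" using C1[OF y0A] by blast
  obtain p q where pq: "e0 = {p,q}" "p \<noteq> q" using e0(2) card_2_iff by metis
  have pA: "p \<in> A" and qA: "q \<in> A" using pq e0 by auto
  obtain e1 where e1: "e1 \<subseteq> A" "card e1 = 2" "p \<notin> e1" "Dg e1 \<noteq> {}" using C1[OF pA] by blast
  have "e1 \<inter> e0 \<noteq> {}" using nodisj[OF e1(1,2,4) e0] .
  then have qe1: "q \<in> e1" using pq e1(3) by blast
  have fe1: "finite e1" using e1(2) card.infinite by fastforce
  have c1: "card (e1 - {q}) = 1" using e1(2) qe1 fe1 by simp
  obtain r where r0: "e1 - {q} = {r}" using card_1_singletonE[OF c1] by blast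
  have r: "e1 = {q,r}" "r \<noteq> q" using r0 qe1 by blast+
  have rA: "r \<in> A" and rp: "r \<noteq> p" using r e1 by auto
  obtain e2 where e2: "e2 \<subseteq> A" "card e2 = 2" "q \<notin> e2" "Dg e2 \<noteq> {}" using C1[OF qA] by blast
  have "e2 \<inter> e0 \<noteq> {}" using nodisj[OF e2(1,2,4) e0] .
  then have pe2: "p \<in> e2" using pq e2(3) by blast
  have "e2 \<inter> e1 \<noteq> {}" using nodisj[OF e2(1,2,4) e1(1,2,4)] .
  then have re2: "r \<in> e2" using r e2(3) by blast
  have e2eq: "e2 = {p,r}" using two_in[OF e2(2) pe2 re2] rp by simp
  have Esub: "e \<subseteq> {p,q,r}" if e: "e \<subseteq> A" "card e = 2" "Dg e \<noteq> {}" for e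
  proof
    fix x assume x: "x \<in> e"
    show "x \<in> {p,q,r}"
    proof (rule ccontr)
      assume nx: "x \<notin> {p,q,r}"
      have m0: "e \<inter> {p,q} \<noteq> {}" using nodisj[OF e e0] pq by simp
      have m1: "e \<inter> {q,r} \<noteq> {}" using nodisj[OF e e1(1,2,4)] r by simp
      have m2: "e \<inter> {p,r} \<noteq> {}" using nodisj[OF e e2(1,2,4)] e2eq by simp
      obtain a where a: "a \<in> e" "a \<in> {p,q}" using m0 by blast
      obtain b where b: "b \<in> e" "b \<in> {q,r}" using m1 by blast
      obtain c where c: "c \<in> e" "c \<in> {p,r}" using m2 by blast
      have "x \<noteq> a" "x \<noteq> b" "x \<noteq> c" using nx a b c by auto
      have "a = b" using three_not[OF e(2) x a(1) b(1)] \<open>x \<noteq> a\<close> \<open>x \<noteq> b\<close> by blast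
      moreover have "a = c" using three_not[OF e(2) x a(1) c(1)] \<open>x \<noteq> a\<close> \<open>x \<noteq> c\<close> by blast
      ultimately show False using a(2) b(2) c(2) pq(2) r(2) rp by auto
    qed
  qed
  have Ecases: "e = {p,q} \<or> e = {q,r} \<or> e = {p,r}" if e: "e \<subseteq> A" "card e = 2" "Dg e \<noteq> {}" for e
  proof -
    have es: "e \<subseteq> {p,q,r}" using Esub[OF e] .
    obtain a b where ab: "e = {a,b}" "a \<noteq> b" using e(2) card_2_iff by metis
    then show ?thesis using es by auto
  qed
  define W where "W = A - {p,q,r}"
  have cW: "card W = t - 1" unfolding W_def using card_AminusU[of "{p,q,r}"] pA qA rA pq(2) r(2) rp by simp
  have finW: "finite W" unfolding W_def using finA by simp
  have Wsub: "W \<subseteq> C" if C: "C \<in> T" "C \<notin> Nmem" for C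
  proof -
    consider "C = A" | "\<exists>y\<in>A. \<exists>z\<in>N y. C = insert z (A - {y})" |
      "\<exists>e. e \<subseteq> A \<and> card e = 2 \<and> (\<exists>D\<in>Dg e. C = (A - e) \<union> D)" using decomp[OF C(1)] by blast
    then show ?thesis
    proof cases
      case 1 then show ?thesis unfolding W_def by blast
    next
      case 2 then have "C \<in> Nmem" unfolding Nmem_def by blast
      then show ?thesis using C(2) by simp
    next
      case 3
      then obtain e D where eD: "e \<subseteq> A" "card e = 2" "D \<in> Dg e" "C = (A - e) \<union> D" by blast
      have "e \<subseteq> {p,q,r}" using Esub[OF eD(1,2)] eD(3) by blast
      then show ?thesis unfolding W_def using eD(4) by blast
    qed
  qed
  have triA: "{p,q,r} \<subseteq> A" using pA qA rA by simp
  have Asplit: "A = {p,q,r} \<union> W" unfolding W_def using triA by blast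
  have disjW: "{p,q,r} \<inter> W = {}" unfolding W_def by blast
  have bnd: "3 * t + 9 \<le> (t + 4) choose 2" using choose_bound[OF t2] .
  show ?thesis
  proof (cases "\<exists>y\<in>W. N y \<noteq> {}")
    case True
    then obtain y0 z0 where y0: "y0 \<in> W" "z0 \<in> N y0" by blast
    have y0A: "y0 \<in> A" and y0n: "y0 \<notin> {p,q,r}" using y0 unfolding W_def by auto
    have zin: "z \<in> D" if "y \<in> W" "z \<in> N y" "e \<subseteq> A" "card e = 2" "D \<in> Dg e" for y z e D
    proof -
      have "e \<subseteq> {p,q,r}" using Esub[OF that(3,4)] that(5) by blast
      moreover have "y \<in> A" "y \<notin> {p,q,r}" using that(1) unfolding W_def by auto
      ultimately show ?thesis using R3[OF that(2,5,3,4)] by blast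
    qed
    let ?M = "(\<lambda>D. (A - {p,q}) \<union> D) ` Dg {p,q} \<union> (\<lambda>D. (A - {q,r}) \<union> D) ` Dg {q,r} \<union> (\<lambda>D. (A - {p,r}) \<union> D) ` Dg {p,r}"
    have sub: "T \<subseteq> {A} \<union> Nmem \<union> ?M"
    proof
      fix C assume C: "C \<in> T"
      consider "C = A" | "\<exists>y\<in>A. \<exists>z\<in>N y. C = insert z (A - {y})" |
        "\<exists>e. e \<subseteq> A \<and> card e = 2 \<and> (\<exists>D\<in>Dg e. C = (A - e) \<union> D)" using decomp[OF C] by blast
      then show "C \<in> {A} \<union> Nmem \<union> ?M"
      proof cases
        case 1 then show ?thesis by simp
      next
        case 2 then have "C \<in> Nmem" unfolding Nmem_def by blast
        then show ?thesis by (simp only: Un_iff simp_thms)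
      next
        case 3
        then obtain e D where eD: "e \<subseteq> A" "card e = 2" "D \<in> Dg e" "C = (A - e) \<union> D" by blast
        have "e = {p,q} \<or> e = {q,r} \<or> e = {p,r}" using Ecases[OF eD(1,2)] eD(3) by blast
        then have "C \<in> ?M" using eD(3,4) by blast
        then show ?thesis by (simp only: Un_iff simp_thms)
      qed
    qed
    have finM: "finite ?M" using finDg by simp
    have cardT: "card T \<le> 1 + card Nmem + card (Dg {p,q}) + card (Dg {q,r}) + card (Dg {p,r})"
    proof -
      have i: "card ((\<lambda>D. (A - c) \<union> D) ` Dg c) \<le> card (Dg c)" for c by (rule card_image_le) (simp add: finDg)
      have "card T \<le> card ({A} \<union> Nmem \<union> ?M)"
        by (rule card_mono[OF _ sub]) (rule finite_UnI[OF finite_UnI[OF _ finNmem] finM], simp)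
      also have "\<dots> \<le> card ({A} \<union> Nmem) + card ?M" by (rule card_Un_le)
      also have "\<dots> \<le> 1 + card Nmem + card ?M" using card_Un_le[of "{A}" Nmem] by simp
      also have "card ?M \<le> card ((\<lambda>D. (A - {p,q}) \<union> D) ` Dg {p,q} \<union> (\<lambda>D. (A - {q,r}) \<union> D) ` Dg {q,r}) + card ((\<lambda>D. (A - {p,r}) \<union> D) ` Dg {p,r})"
        by (rule card_Un_le)
      also have "\<dots> \<le> card ((\<lambda>D. (A - {p,q}) \<union> D) ` Dg {p,q}) + card ((\<lambda>D. (A - {q,r}) \<union> D) ` Dg {q,r}) + card ((\<lambda>D. (A - {p,r}) \<union> D) ` Dg {p,r})"
        using card_Un_le[of "(\<lambda>D. (A - {p,q}) \<union> D) ` Dg {p,q}" "(\<lambda>D. (A - {q,r}) \<union> D) ` Dg {q,r}"] by linarith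
      finally show ?thesis using i[of "{p,q}"] i[of "{q,r}"] i[of "{p,r}"] by linarith
    qed
    have cNmem: "card Nmem \<le> (\<Sum>y\<in>A. card (N y))"
    proof -
      have "card Nmem \<le> (\<Sum>y\<in>A. card ((\<lambda>z. insert z (A - {y})) ` N y))"
        unfolding Nmem_def by (rule card_UN_le[OF finA])
      also have "\<dots> \<le> (\<Sum>y\<in>A. card (N y))"
        by (rule sum_mono) (rule card_image_le, rule NNle2(2))
      finally show ?thesis .
    qed
    have sumsplit: "(\<Sum>y\<in>A. card (N y)) = (\<Sum>y\<in>{p,q,r}. card (N y)) + (\<Sum>y\<in>W. card (N y))"
      using Asplit disjW finW by (metis finite.emptyI finite.insertI sum.union_disjoint)
    have s3: "(\<Sum>y\<in>{p,q,r}. card (N y)) \<le> 6"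
    proof -
      have "(\<Sum>y\<in>{p,q,r}. card (N y)) \<le> of_nat (card {p,q,r}) * 2"
        by (rule sum_bounded_above) (use NNle2(1) triA in blast)
      also have "card {p,q,r} = 3" using pq(2) r(2) rp by simp
      finally show ?thesis by simp
    qed
    have pqA: "{p,q} \<subseteq> A" "card {p,q} = 2" and qrA: "{q,r} \<subseteq> A" "card {q,r} = 2"
      and prA: "{p,r} \<subseteq> A" "card {p,r} = 2" using pA qA rA pq(2) r(2) rp by auto
    show ?thesis
    proof (cases "\<exists>y\<in>W. card (N y) = 2")
      case True
      then obtain y1 where y1: "y1 \<in> W" "card (N y1) = 2" by blast
      obtain z1 z2 where zz: "N y1 = {z1,z2}" "z1 \<noteq> z2" using y1(2) card_2_iff by metis
      have one: "card (Dg e) \<le> 1" if "e \<subseteq> A" "card e = 2" for e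
      proof -
        have "Dg e \<subseteq> {{z1,z2}}"
        proof
          fix D assume D: "D \<in> Dg e"
          have "z1 \<in> D" "z2 \<in> D" using zin[OF y1(1) _ that D] zz by auto
          then have "D = {z1,z2}" using two_in[OF _ _ _ zz(2)] DgD[OF D] by blast
          then show "D \<in> {{z1,z2}}" by simp
        qed
        then have "card (Dg e) \<le> card {{z1,z2}}" by (rule card_mono[rotated]) simp
        then show ?thesis by simp
      qed
      have sW: "(\<Sum>y\<in>W. card (N y)) \<le> 2 * (t - 1)"
      proof -
        have "(\<Sum>y\<in>W. card (N y)) \<le> of_nat (card W) * 2"
          by (rule sum_bounded_above) (use NNle2(1) Asplit in blast)
        then show ?thesis using cW by simp
      qed
      have "card T \<le> 1 + (6 + 2 * (t - 1)) + 1 + 1 + 1"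
        using cardT cNmem sumsplit s3 sW one[OF pqA] one[OF qrA] one[OF prA] by linarith
      then show ?thesis using t2 by linarith
    next
      case False
      have two: "card (Dg e) \<le> 2" if "e \<subseteq> A" "card e = 2" for e
      proof -
        have "Dg e \<subseteq> {D \<in> Dg e. z0 \<in> D}" using zin[OF y0 that] by blast
        then have "card (Dg e) \<le> card {D \<in> Dg e. z0 \<in> D}" by (rule card_mono[rotated]) (simp add: finDg)
        then show ?thesis using star2''[OF that, of z0] by linarith
      qed
      have sW: "(\<Sum>y\<in>W. card (N y)) \<le> t - 1"
      proof -
        have "(\<Sum>y\<in>W. card (N y)) \<le> of_nat (card W) * 1"
        proof (rule sum_bounded_above)
          fix y assume y: "y \<in> W"
          then have "y \<in> A" using Asplit by blast
          then show "card (N y) \<le> 1" using NNle2(1)[of y] False y by fastforce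
        qed
        then show ?thesis using cW by simp
      qed
      have "card T \<le> 1 + (6 + (t - 1)) + 2 + 2 + 2"
        using cardT cNmem sumsplit s3 sW two[OF pqA] two[OF qrA] two[OF prA] by linarith
      then show ?thesis using t2 by linarith
    qed
  next
    case False
    then have NW: "\<forall>y\<in>W. N y = {}" by blast
    have WC: "W \<subseteq> C" if C: "C \<in> T" for C
    proof (cases "C \<in> Nmem")
      case False then show ?thesis using Wsub C by blast
    next
      case True
      then obtain y z where yz: "y \<in> A" "z \<in> N y" "C = insert z (A - {y})" unfolding Nmem_def by blast
      have "y \<notin> W" using NW yz(2) by blast
      then show ?thesis using yz(3) unfolding W_def by blast
    qed
    define H where "H = (\<lambda>C. C - W) ` T"
    have injH: "inj_on (\<lambda>C. C - W) T"
    proof (rule inj_onI)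
      fix C C' assume CC: "C \<in> T" "C' \<in> T" "C - W = C' - W"
      have "C = (C - W) \<union> W" using WC[OF CC(1)] by blast
      also have "\<dots> = (C' - W) \<union> W" using CC(3) by simp
      also have "\<dots> = C'" using WC[OF CC(2)] by blast
      finally show "C = C'" .
    qed
    have cTH: "card T = card H" unfolding H_def using card_image[OF injH] by simp
    have Hmem: "h \<in> H \<Longrightarrow> \<exists>C\<in>T. h = C - W" for h unfolding H_def by blast
    have cardh: "card (C - W) = 3" if "C \<in> T" for C
    proof -
      have "card (C - W) = card C - card W" using card_Diff_subset[OF finW WC[OF that]] .
      then show ?thesis using memb[OF that] cW t2 by simp
    qed
    have finH: "finite H" unfolding H_def using finT by simp
    have finUH: "finite (\<Union>H)"
    proof -
      have "\<Union>H \<subseteq> G" unfolding H_def using memb by blast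
      then show ?thesis using finG finite_subset by blast
    qed
    have UHW: "\<Union>H \<inter> W = {}" unfolding H_def by blast
    have UHG: "\<Union>H \<subseteq> G" unfolding H_def using memb by blast
    have hyp: "tfamA (\<Union>H) 1 H (A - W)"
    proof (intro tfamA.intro tfam.intro tfamA_axioms.intro)
      show "finite (\<Union>H)" by (rule finUH)
      show "C \<subseteq> \<Union>H \<and> card C = 1 + 2" if CH: "C \<in> H" for C
      proof -
        obtain X where X: "X \<in> T" "C = X - W" using Hmem[OF CH] by blast
        have "card C = 3" using cardh[OF X(1)] X(2) by simp
        moreover have "C \<subseteq> \<Union>H" using CH by blast
        ultimately show ?thesis by simp
      qed
      show "1 \<le> card (C \<inter> C')" if CH: "C \<in> H" "C' \<in> H" for C C'
      proof -
        obtain X where X1: "X \<in> T" "C = X - W" using Hmem[OF CH(1)] by blast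
        obtain X' where X2: "X' \<in> T" "C' = X' - W" using Hmem[OF CH(2)] by blast
        have X: "X \<in> T" "C = X - W" "X' \<in> T" "C' = X' - W" using X1 X2 by auto
        have "C \<inter> C' = (X \<inter> X') - W" using X by blast
        moreover have "W \<subseteq> X \<inter> X'" using WC[OF X(1)] WC[OF X(3)] by blast
        moreover have "finite (X \<inter> X')" using memfin[OF X(1)] by simp
        ultimately have "card (C \<inter> C') = card (X \<inter> X') - card W"
          using card_Diff_subset[of W "X \<inter> X'"] finW by simp
        moreover have "t \<le> card (X \<inter> X')" using tint[OF X(1) X(3)] .
        ultimately show ?thesis using cW t2 by simp
      qed
      show "\<exists>C\<in>H. card (S \<inter> C) < 1" if S: "S \<subseteq> \<Union>H" "card S = 1 + 1" for S
      proof -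
        have SW: "S \<inter> W = {}" using S(1) UHW by blast
        have finS: "finite S" using S(2) card.infinite by fastforce
        have S1: "S \<union> W \<subseteq> G" using S(1) UHG AG unfolding W_def by blast
        have S2: "card (S \<union> W) = t + 1" using card_Un_disjoint[OF finS finW SW] S(2) cW t2 by simp
        obtain C where C: "C \<in> T" "card ((S \<union> W) \<inter> C) < t" using nocov[OF S1 S2] by blast
        have "(S \<union> W) \<inter> C = (S \<inter> (C - W)) \<union> W" using WC[OF C(1)] SW by blast
        moreover have "(S \<inter> (C - W)) \<inter> W = {}" by blast
        ultimately have "card ((S \<union> W) \<inter> C) = card (S \<inter> (C - W)) + card W"
          using finS finW by (simp add: card_Un_disjoint)
        then have "card (S \<inter> (C - W)) < 1" using C(2) cW t2 by simp
        moreover have "C - W \<in> H" unfolding H_def using C(1) by blast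
        ultimately show ?thesis by blast
      qed
      show "(1::nat) \<le> 1" by simp
      show "A - W \<in> H" unfolding H_def using AT by blast
    qed
    have "card H \<le> 12" using tfamA.L1[OF hyp] by simp
    then show ?thesis using cTH t2 by simp
  qed
qed


lemma main2:
  assumes t2: "2 \<le> t"
  shows "card T < (t + 4) choose 2 \<or> (\<exists>Z. Z \<subseteq> G \<and> card Z = t + 4 \<and> T \<subseteq> {C. C \<subseteq> Z \<and> card C = t + 2})"
proof (cases "\<exists>e1 e2. e1 \<subseteq> A \<and> card e1 = 2 \<and> Dg e1 \<noteq> {} \<and> e2 \<subseteq> A \<and> card e2 = 2 \<and> Dg e2 \<noteq> {} \<and> e1 \<inter> e2 = {}")
  case False
  then have "card T \<le> 3 * t + 8" using caseII[OF t2] by blast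
  then show ?thesis using choose_bound[OF t2] by linarith
next
  case True
  then obtain e1 e2 where e: "e1 \<subseteq> A" "card e1 = 2" "Dg e1 \<noteq> {}" "e2 \<subseteq> A" "card e2 = 2" "Dg e2 \<noteq> {}" "e1 \<inter> e2 = {}"
    by blast
  obtain D0 where D0: "D0 \<in> Dg e1" using e(3) by blast
  obtain D0' where D0': "D0' \<in> Dg e2" using e(6) by blast
  have r12: "D = D'" if "D \<in> Dg e1" "D' \<in> Dg e2" for D D'
    using R1[OF that e(1,4,2,5,7)] .
  have DD0: "D0' = D0" using r12[OF D0 D0'] by simp
  have Dg1: "Dg e1 = {D0}" using r12 D0' DD0 D0 by blast
  have Dg2: "Dg e2 = {D0}" using r12 D0 D0' DD0 by blast
  have d0: "card D0 = 2" "D0 \<inter> A = {}" "(A - e1) \<union> D0 \<in> T" "finite D0" using DgD[OF D0] by auto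
  have NinD0: "z \<in> D0" if "y \<in> A" "z \<in> N y" for y z
  proof (cases "y \<in> e1")
    case True
    then have "y \<notin> e2" using e(7) by blast
    then show ?thesis using R3[OF that(2) _ e(4,5) that(1)] Dg2 by blast
  next
    case False
    then show ?thesis using R3[OF that(2) _ e(1,2) that(1)] Dg1 by blast
  qed
  show ?thesis
  proof (cases "\<forall>e. e \<subseteq> A \<longrightarrow> card e = 2 \<longrightarrow> Dg e \<subseteq> {D0}")
    case True
    define Z where "Z = A \<union> D0"
    have ZG: "Z \<subseteq> G" unfolding Z_def using AG memb[OF d0(3)] by blast
    have AD: "A \<inter> D0 = {}" using d0(2) by blast
    have cZ: "card Z = t + 4" unfolding Z_def using card_Un_disjoint[OF finA d0(4) AD] cardA d0(1) by simp
    have "T \<subseteq> {C. C \<subseteq> Z \<and> card C = t + 2}"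
    proof
      fix C assume C: "C \<in> T"
      consider "C = A" | "\<exists>y\<in>A. \<exists>z\<in>N y. C = insert z (A - {y})" |
        "\<exists>e. e \<subseteq> A \<and> card e = 2 \<and> (\<exists>D\<in>Dg e. C = (A - e) \<union> D)" using decomp[OF C] by blast
      then have "C \<subseteq> Z"
      proof cases
        case 1 then show ?thesis unfolding Z_def by blast
      next
        case 2
        then obtain y z where yz: "y \<in> A" "z \<in> N y" "C = insert z (A - {y})" by blast
        have "z \<in> D0" using NinD0[OF yz(1,2)] .
        then show ?thesis using yz(3) unfolding Z_def by blast
      next
        case 3
        then obtain e D where eD: "e \<subseteq> A" "card e = 2" "D \<in> Dg e" "C = (A - e) \<union> D" by blast
        have "D = D0" using True eD(1-3) by blast
        then show ?thesis using eD(4) unfolding Z_def by blast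
      qed
      then show "C \<in> {C. C \<subseteq> Z \<and> card C = t + 2}" using memb[OF C] by simp
    qed
    then show ?thesis using ZG cZ by blast
  next
    case False
    then obtain e D where eD: "e \<subseteq> A" "card e = 2" "D \<in> Dg e" "D \<noteq> D0" by blast
    have fe: "finite e" "finite e1" "finite e2" using eD(2) e(2,5) card.infinite by fastforce+
    have me1: "e \<inter> e1 \<noteq> {}"
    proof
      assume "e \<inter> e1 = {}"
      then have "D = D0" using R1[OF eD(3) D0 eD(1) e(1) eD(2) e(2)] by simp
      then show False using eD(4) by simp
    qed
    have me2: "e \<inter> e2 \<noteq> {}"
    proof
      assume "e \<inter> e2 = {}"
      then have "D = D0" using R1[OF eD(3) _ eD(1) e(4) eD(2) e(5)] Dg2 by blast
      then show False using eD(4) by simp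
    qed
    obtain p1 where p1: "p1 \<in> e" "p1 \<in> e1" using me1 by blast
    obtain q1 where q1: "q1 \<in> e" "q1 \<in> e2" using me2 by blast
    have pq1: "p1 \<noteq> q1" using p1 q1 e(7) by blast
    have eeq: "e = {p1,q1}" using two_in[OF eD(2) p1(1) q1(1) pq1] .
    have c1: "card (e1 - {p1}) = 1" using e(2) p1(2) fe(2) by simp
    obtain p2 where p2: "e1 - {p1} = {p2}" using card_1_singletonE[OF c1] by blast
    have e1eq: "e1 = {p1,p2}" and p12: "p1 \<noteq> p2" using p2 p1(2) by blast+
    have c2: "card (e2 - {q1}) = 1" using e(5) q1(2) fe(3) by simp
    obtain q2 where q2: "e2 - {q1} = {q2}" using card_1_singletonE[OF c2] by blast
    have e2eq: "e2 = {q1,q2}" and q12: "q1 \<noteq> q2" using q2 q1(2) by blast+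
    have dist: "p1 \<in> A" "p2 \<in> A" "q1 \<in> A" "q2 \<in> A" "p1 \<noteq> p2" "p1 \<noteq> q1" "p1 \<noteq> q2" "p2 \<noteq> q1" "p2 \<noteq> q2" "q1 \<noteq> q2"
      using e(1,4,7) e1eq e2eq p12 q12 pq1 by blast+
    have dd: "card D = 2" "D \<inter> A = {}" "finite D" using DgD[OF eD(3)] by auto
    have "e \<union> e1 = {p1,q1,p2}" using eeq e1eq by blast
    then have "card (e \<union> e1) = 3" using dist by simp
    then have mD: "D \<inter> D0 \<noteq> {}" using R2[OF eD(3) D0 eD(1) e(1)] by blast
    then obtain w1 where w1: "w1 \<in> D" "w1 \<in> D0" by blast
    have c3: "card (D0 - {w1}) = 1" using d0(1,4) w1(2) by simp
    obtain w2 where w2: "D0 - {w1} = {w2}" using card_1_singletonE[OF c3] by blast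
    have D0eq: "D0 = {w1,w2}" and w12: "w1 \<noteq> w2" using w2 w1(2) by blast+
    have c4: "card (D - {w1}) = 1" using dd(1,3) w1(1) by simp
    obtain u where u: "D - {w1} = {u}" using card_1_singletonE[OF c4] by blast
    have Deq: "D = {w1,u}" and w1u: "w1 \<noteq> u" using u w1(1) by blast+
    have w2u: "w2 \<noteq> u" using Deq D0eq eD(4) by blast
    have wdist: "w1 \<notin> A" "w2 \<notin> A" "u \<notin> A" "w1 \<noteq> w2" "w1 \<noteq> u" "w2 \<noteq> u"
      using d0(2) dd(2) D0eq Deq w12 w1u w2u by blast+
    have ci: "caseI G t T A p1 p2 q1 q2 w1 w2 u"
      unfolding caseI_def caseI_axioms_def
      using tfamA_axioms dist wdist Dg1 Dg2 e1eq e2eq D0eq eD(3) eeq Deq by auto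
    have "card T \<le> 3 * t + 8" using caseI.caseI_all[OF ci t2] .
    then show ?thesis using choose_bound[OF t2] by linarith
  qed
qed

end

theorem proposition2p10:
  fixes n k t :: nat and F :: "nat set set"
  assumes "n > 2 * k" and "k \<ge> t + 3"
    and "maximal_t_intersecting n k t F"
    and "tau n t F = t + 2"
    and "tau n t (Tcov n t F) = t + 2"
  shows "(t = 1 \<longrightarrow> card (Tcov n t F) < (k - t) * (k - t + 1) + 1)
       \<and> (t \<ge> 2 \<longrightarrow>
            card (Tcov n t F) \<le> (t + 4) choose 2 \<and>
            (card (Tcov n t F) = (t + 4) choose 2 \<longrightarrow>
               (\<exists>Z \<in> ksets {1..n} (t + 4). Tcov n t F = ksets Z (t + 2))))"
proof -
  define T where "T = Tcov n t F"
  have tauT: "tau n t T = t + 2" using assms(5) T_def by simp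
  have memT: "C \<subseteq> {1..n} \<and> card C = t + 2" if "C \<in> T" for C
    using that assms(4) unfolding T_def Tcov_def t_cover_def by auto
  have covT: "t \<le> card (C \<inter> X)" if "C \<in> T" "X \<in> F" for C X
    using that unfolding T_def Tcov_def t_cover_def by auto
  have Fk: "F \<subseteq> ksets {1..n} k" and Fint: "t_intersecting t F"
    and Fmax: "\<And>G. F \<subset> G \<Longrightarrow> G \<subseteq> ksets {1..n} k \<Longrightarrow> \<not> t_intersecting t G"
    using assms(3) unfolding maximal_t_intersecting_def by auto
  have ext: "X \<in> F" if S: "S \<in> T" and X: "X \<subseteq> {1..n}" "card X = k" "S \<subseteq> X" for S X
  proof (rule ccontr)
    assume nX: "X \<notin> F"
    have finX: "finite X" using X(1) finite_subset by blast
    have "F \<subset> insert X F" using nX by blast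
    moreover have "insert X F \<subseteq> ksets {1..n} k" using Fk X unfolding ksets_def by blast
    moreover have "t_intersecting t (insert X F)"
      unfolding t_intersecting_def
    proof (intro ballI)
      fix Y1 Y2 assume Y: "Y1 \<in> insert X F" "Y2 \<in> insert X F"
      have XY: "t \<le> card (X \<inter> Y)" if "Y \<in> F" for Y
      proof -
        have "t \<le> card (S \<inter> Y)" using covT[OF S that] .
        also have "\<dots> \<le> card (X \<inter> Y)" using X(3) finX by (intro card_mono) auto
        finally show ?thesis .
      qed
      show "t \<le> card (Y1 \<inter> Y2)"
      proof (cases "Y1 = X")
        case True
        show ?thesis
        proof (cases "Y2 = X")
          case True then show ?thesis using \<open>Y1 = X\<close> X(2) assms(2) by simp
        next
          case False then show ?thesis using \<open>Y1 = X\<close> Y(2) XY by simp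
        qed
      next
        case False
        show ?thesis
        proof (cases "Y2 = X")
          case True
          have "Y1 \<in> F" using False Y(1) by simp
          then have "t \<le> card (X \<inter> Y1)" by (rule XY)
          then show ?thesis using True by (simp add: Int_commute)
        next
          case F2: False then show ?thesis using False Y Fint unfolding t_intersecting_def by simp
        qed
      qed
    qed
    ultimately show False using Fmax by blast
  qed
  have tintT: "t \<le> card (S \<inter> S')" if SS: "S \<in> T" "S' \<in> T" for S S'
  proof -
    have mS: "S \<subseteq> {1..n}" "card S = t + 2" "S' \<subseteq> {1..n}" "card S' = t + 2" using memT SS by auto
    have finS: "finite S" "finite S'" using mS finite_subset by blast+
    define R where "R = {1..n} - (S \<union> S')"
    have cU: "card (S \<union> S') \<le> 2 * t + 4" using card_Un_le[of S S'] mS by simp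
    have cR: "card R = n - card (S \<union> S')" unfolding R_def using mS by (simp add: card_Diff_subset finS)
    have "k - (t + 2) \<le> card R" using cR cU assms(1,2) by linarith
    then obtain R' where R': "R' \<subseteq> R" "card R' = k - (t + 2)" "finite R'" by (rule obtain_subset_with_card_n)
    define X where "X = S \<union> R'"
    have dj: "S \<inter> R' = {}" using R' unfolding R_def by blast
    have cX: "card X = k" unfolding X_def using card_Un_disjoint[OF finS(1) R'(3) dj] R'(2) mS assms(2) by simp
    have Xn: "X \<subseteq> {1..n}" unfolding X_def using mS R' unfolding R_def by blast
    have XF: "X \<in> F" using ext[OF SS(1) Xn cX] unfolding X_def by blast
    have "t \<le> card (S' \<inter> X)" using covT[OF SS(2) XF] .
    moreover have "S' \<inter> X = S \<inter> S'" unfolding X_def using R' unfolding R_def by blast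
    ultimately show ?thesis by simp
  qed
  have nocovT: "\<exists>C\<in>T. card (S \<inter> C) < t" if S: "S \<subseteq> {1..n}" "card S = t + 1" for S
  proof (rule ccontr)
    assume "\<not> ?thesis"
    then have "t_cover n t T S" unfolding t_cover_def using S by (auto simp: not_less)
    then have "\<exists>S'. t_cover n t T S' \<and> card S' = card S" by blast
    then have "tau n t T \<le> card S" unfolding tau_def by (rule Least_le)
    then show False using tauT S(2) by simp
  qed
  have finT: "finite T"
  proof -
    have "T \<subseteq> Pow {1..n}" using memT by blast
    then show ?thesis using finite_subset by blast
  qed
  show ?thesis
  proof (cases "t = 0")
    case True then show ?thesis by simp
  next
    case False
    then have t1: "1 \<le> t" by simp
    have tf: "tfam {1..n} t T"
      using memT tintT nocovT t1 by (intro tfam.intro) auto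
    show ?thesis
    proof (cases "T = {}")
      case True
      have "0 < (t + 4) choose 2" by simp
      then show ?thesis using True unfolding T_def[symmetric] by auto
    next
      case False
      then obtain A where AT: "A \<in> T" by blast
      have tfA: "tfamA {1..n} t T A" using tf AT by (intro tfamA.intro tfamA_axioms.intro)
      show ?thesis
      proof (cases "t = 1")
        case True
        have c12: "card T \<le> 12" using tfamA.L1[OF tfA True] .
        have "(k - t) * (k - t + 1) \<ge> 3 * 4" using assms(2) True by (intro mult_le_mono) auto
        then have "card T < (k - t) * (k - t + 1) + 1" using c12 by linarith
        then show ?thesis using True unfolding T_def by simp
      next
        case False
        then have t2: "2 \<le> t" using t1 by simp
        from tfamA.main2[OF tfA t2] show ?thesis
        proof
          assume "card T < (t + 4) choose 2"
          then show ?thesis using False unfolding T_def by simp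
        next
          assume "\<exists>Z. Z \<subseteq> {1..n} \<and> card Z = t + 4 \<and> T \<subseteq> {C. C \<subseteq> Z \<and> card C = t + 2}"
          then obtain Z where Z: "Z \<subseteq> {1..n}" "card Z = t + 4" "T \<subseteq> {C. C \<subseteq> Z \<and> card C = t + 2}" by blast
          have finZ: "finite Z" using Z(1) finite_subset by blast
          have ck: "card (ksets Z (t + 2)) = (t + 4) choose 2"
          proof -
            have "card (ksets Z (t + 2)) = (t + 4) choose (t + 2)" unfolding ksets_def using n_subsets[OF finZ] Z(2) by simp
            also have "\<dots> = (t + 4) choose 2" using binomial_symmetric[of "t + 2" "t + 4"] by simp
            finally show ?thesis .
          qed
          have sub: "T \<subseteq> ksets Z (t + 2)" using Z(3) unfolding ksets_def by blast
          have finK: "finite (ksets Z (t + 2))" unfolding ksets_def using finZ by simp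
          have le: "card T \<le> (t + 4) choose 2" using card_mono[OF finK sub] ck by simp
          have eq: "T = ksets Z (t + 2)" if "card T = (t + 4) choose 2"
            using card_subset_eq[OF finK sub] that ck by simp
          have Zk: "Z \<in> ksets {1..n} (t + 4)" unfolding ksets_def using Z by simp
          show ?thesis using le eq Zk False unfolding T_def by auto
        qed
      qed
    qed
  qed
qed

end
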